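(* For every integer $v\ge 1$ there is a polynomial $p_{v-1}(x)$ of degree $v-1$ with real coefficients such that for all integers $m\ge1$, $$S_{m,v}=(2m^2)^{-v}(m^2-1)\,p_{v-1}(m^2).$$ Its leading coefficient is $2^{v}\zeta(2v)$, and its constant term is $$p_{v-1}(0)=\frac{2^{v}}{(2v-1)!}\sum_{j=0}^{v-1}\pi^{2j}\,s(v,j)\,\Gamma(2v-2j)\,\zeta(2v-2j).$$
   Context: The Gardner–Fisher sum is $S_{m,v}=\left(\frac{\pi}{2m}\right)^{2v}\sum_{k=1}^{m-1}\sin^{-2v}\!\left(\frac{k\pi}{2m}\right)$. For integers $v\ge1$ and $0\le n\le v-1$, $s(v,n)$ denotes the $n$-th elementary symmetric polynomial evaluated at $1^2,2^2,\dots,(v-1)^2$, with $s(v,0)=1$. $\zeta$ is the Riemann zeta function. *)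

theory Defs
  imports "HOL-Analysis.Analysis" "HOL-Computational_Algebra.Polynomial"
begin

text \<open>Riemann zeta function on the reals, via its Dirichlet series (used only for s > 1).\<close>
definition zeta_real :: "real \<Rightarrow> real" where
  "zeta_real s = (\<Sum>n. 1 / (real (Suc n)) powr s)"

definition GF_sum :: "nat \<Rightarrow> nat \<Rightarrow> real" where
  "GF_sum m v = (pi / (2 * real m)) ^ (2 * v) *
     (\<Sum>k = 1..m - 1. 1 / (sin (real k * pi / (2 * real m))) ^ (2 * v))"

definition esym_sq :: "nat \<Rightarrow> nat \<Rightarrow> real" where
  "esym_sq v n = (\<Sum>A \<in> {A. A \<subseteq> {1..v - 1} \<and> card A = n}. \<Prod>i\<in>A. (real i)^2)"

end

theory Submission
  imports Defs
begin

definition G :: "nat \<Rightarrow> real \<Rightarrow> real" where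
  "G k t = (\<Sum>\<^sub>\<infinity>n::int. 1 / (t - of_int n) ^ k)"

lemma term_bound:
  fixes x c :: real
  assumes "\<bar>x\<bar> \<le> c" "2 * c + 2 \<le> real j" "2 \<le> k"
  shows "\<bar>1 / (x - real j) ^ k\<bar> \<le> 4 * inverse (real j ^ 2)"
    and "\<bar>1 / (x + real j + 1) ^ k\<bar> \<le> 4 * inverse (real j ^ 2)"
proof -
  have gen: "\<bar>1 / y ^ k\<bar> \<le> 4 * inverse (real j ^ 2)" if y: "real j \<le> 2 * \<bar>y\<bar>" for y :: real
  proof -
    have j2: "2 \<le> real j" using assms by linarith
    have y1: "1 \<le> \<bar>y\<bar>" using y j2 by linarith
    have "\<bar>y\<bar> ^ 2 \<le> \<bar>y\<bar> ^ k" using y1 assms(3) by (intro power_increasing) auto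
    moreover have "(real j / 2) ^ 2 \<le> \<bar>y\<bar> ^ 2" using y j2 by (intro power_mono) auto
    ultimately have le: "real j ^ 2 / 4 \<le> \<bar>y\<bar> ^ k" by (simp add: power_divide)
    have pos: "0 < real j ^ 2 / 4" using j2 by simp
    have "\<bar>1 / y ^ k\<bar> = 1 / \<bar>y\<bar> ^ k" by (simp add: power_abs)
    also have "\<dots> \<le> 1 / (real j ^ 2 / 4)" using le pos y1 by (intro divide_left_mono) (auto intro!: mult_pos_pos)
    also have "\<dots> = 4 * inverse (real j ^ 2)" by (simp add: field_simps)
    finally show ?thesis .
  qed
  show "\<bar>1 / (x - real j) ^ k\<bar> \<le> 4 * inverse (real j ^ 2)"
    using assms by (intro gen) (smt (verit))
  show "\<bar>1 / (x + real j + 1) ^ k\<bar> \<le> 4 * inverse (real j ^ 2)"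
    using assms by (intro gen) (smt (verit))
qed

lemma int_has_sum_from_nat:
  fixes f :: "int \<Rightarrow> real"
  assumes "summable (\<lambda>j. \<bar>f (int j)\<bar>)" "summable (\<lambda>j. \<bar>f (- int j - 1)\<bar>)"
  shows "(f has_sum ((\<Sum>j. f (int j)) + (\<Sum>j. f (- int j - 1)))) UNIV"
proof -
  have h1: "((\<lambda>j. f (int j)) has_sum (\<Sum>j. f (int j))) UNIV"
    using assms(1) summable_rabs_cancel[OF assms(1)] by (intro norm_summable_imp_has_sum) (auto intro: summable_sums)
  have h2: "((\<lambda>j. f (- int j - 1)) has_sum (\<Sum>j. f (- int j - 1))) UNIV"
    using assms(2) summable_rabs_cancel[OF assms(2)] by (intro norm_summable_imp_has_sum) (auto intro: summable_sums)
  have i1: "inj (int)" by (auto simp: inj_on_def)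
  have i2: "inj (\<lambda>j::nat. - int j - 1)" by (auto simp: inj_on_def)
  have a: "(f has_sum (\<Sum>j. f (int j))) (range int)"
    using h1 has_sum_reindex[OF i1, of f] by (simp add: o_def)
  have b: "(f has_sum (\<Sum>j. f (- int j - 1))) (range (\<lambda>j::nat. - int j - 1))"
    using h2 has_sum_reindex[OF i2, of f] by (simp add: o_def)
  have U: "range int \<union> range (\<lambda>j::nat. - int j - 1) = UNIV"
  proof safe
    fix x :: int assume "x \<notin> range (\<lambda>j::nat. - int j - 1)"
    then have "x \<ge> 0"
    proof (rule contrapos_np)
      assume "\<not> x \<ge> 0"
      then have "x = - int (nat (- x - 1)) - 1" by simp
      then show "x \<in> range (\<lambda>j::nat. - int j - 1)" by blast
    qed
    then show "x \<in> range int" by (metis nonneg_int_cases rangeI)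
  qed auto
  have D: "range int \<inter> range (\<lambda>j::nat. - int j - 1) = {}" by auto
  show ?thesis using has_sum_Un_disjoint[OF a b D] U by simp
qed

lemma ev_ge: "eventually (\<lambda>j::nat. c \<le> real j) sequentially"
  unfolding eventually_sequentially
proof (intro exI[of _ "nat \<lceil>c\<rceil>"] allI impI)
  fix j :: nat assume "nat \<lceil>c\<rceil> \<le> j"
  then have "real (nat \<lceil>c\<rceil>) \<le> real j" by simp
  moreover have "c \<le> real (nat \<lceil>c\<rceil>)" by (rule real_nat_ceiling_ge)
  ultimately show "c \<le> real j" by linarith
qed

lemma inv_sq_summable: "summable (\<lambda>j::nat. 4 * inverse (real j ^ 2))"
  using inverse_power_summable[of 2, where 'a=real] by (intro summable_mult) auto

lemma G_parts_summable:
  assumes "2 \<le> k"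
  shows "summable (\<lambda>j. \<bar>1 / (t - real j) ^ k\<bar>)" "summable (\<lambda>j. \<bar>1 / (t + real j + 1) ^ k\<bar>)"
proof -
  have ev: "eventually (\<lambda>j. 2 * \<bar>t\<bar> + 2 \<le> real j) sequentially" by (rule ev_ge)
  show "summable (\<lambda>j. \<bar>1 / (t - real j) ^ k\<bar>)"
    by (rule summable_comparison_test_ev[OF _ inv_sq_summable])
       (use ev in \<open>eventually_elim\<close>, use term_bound(1)[of t "\<bar>t\<bar>" _ k] assms in auto)
  show "summable (\<lambda>j. \<bar>1 / (t + real j + 1) ^ k\<bar>)"
    by (rule summable_comparison_test_ev[OF _ inv_sq_summable])
       (use ev in \<open>eventually_elim\<close>, use term_bound(2)[of t "\<bar>t\<bar>" _ k] assms in auto)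
qed

lemma G_has_sum:
  assumes "2 \<le> k"
  shows "((\<lambda>n::int. 1 / (t - of_int n) ^ k) has_sum
           ((\<Sum>j. 1 / (t - real j) ^ k) + (\<Sum>j. 1 / (t + real j + 1) ^ k))) UNIV"
proof -
  define f where "f = (\<lambda>n::int. 1 / (t - of_int n) ^ k)"
  have e1: "(\<lambda>j. f (int j)) = (\<lambda>j. 1 / (t - real j) ^ k)" by (simp add: f_def)
  have e2: "(\<lambda>j. f (- int j - 1)) = (\<lambda>j. 1 / (t + real j + 1) ^ k)"
    by (rule ext) (simp add: f_def algebra_simps)
  have s1: "summable (\<lambda>j. \<bar>f (int j)\<bar>)" using G_parts_summable(1)[OF assms, of t] by (simp add: f_def)
  have s2: "summable (\<lambda>j. \<bar>f (- int j - 1)\<bar>)"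
  proof -
    have "(\<lambda>j. \<bar>f (- int j - 1)\<bar>) = (\<lambda>j. \<bar>1 / (t + real j + 1) ^ k\<bar>)"
      by (rule ext) (simp add: f_def algebra_simps)
    then show ?thesis using G_parts_summable(2)[OF assms, of t] by simp
  qed
  have "(f has_sum ((\<Sum>j. f (int j)) + (\<Sum>j. f (- int j - 1)))) UNIV"
    by (rule int_has_sum_from_nat[OF s1 s2])
  then show ?thesis unfolding e1 e2 by (simp add: f_def)
qed

lemma G_summable: "2 \<le> k \<Longrightarrow> (\<lambda>n::int. 1 / ((t::real) - of_int n) ^ k) summable_on A"
  using summable_on_subset_banach[OF has_sum_imp_summable[OF G_has_sum] subset_UNIV] by blast

lemma G_sums:
  assumes "2 \<le> k"
  shows "(\<lambda>j. 1 / (t - real j) ^ k + 1 / (t + real j + 1) ^ k) sums G k t"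
proof -
  have "G k t = (\<Sum>j. 1 / (t - real j) ^ k) + (\<Sum>j. 1 / (t + real j + 1) ^ k)"
    unfolding G_def using G_has_sum[OF assms] by (rule infsumI)
  then show ?thesis
    using G_parts_summable[OF assms, of t]
    by (simp add: sums_add summable_rabs_cancel summable_sums)
qed

lemma inv_pow_deriv:
  fixes a x :: real
  assumes "x \<noteq> a"
  shows "((\<lambda>x. 1 / (x - a) ^ k) has_real_derivative (- real k / (x - a) ^ Suc k)) (at x within S)"
proof -
  have alg: "- (real k * (1 * y ^ (k - Suc 0)) * inverse ((y ^ k) ^ Suc (Suc 0))) = - real k / y ^ Suc k"
    if "y \<noteq> 0" for y :: real
    using that by (cases k) (simp_all add: field_simps)
  have d: "((\<lambda>x. (x - a) ^ k) has_real_derivative real k * (1 * (x - a) ^ (k - Suc 0))) (at x within S)"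
    by (intro DERIV_power derivative_eq_intros) auto
  have "((\<lambda>x. inverse ((x - a) ^ k)) has_real_derivative
         - (real k * (1 * (x - a) ^ (k - Suc 0)) * inverse (((x - a) ^ k) ^ Suc (Suc 0)))) (at x within S)"
    using assms by (intro DERIV_inverse_fun[OF d]) auto
  then show ?thesis using alg[of "x - a"] assms by (simp add: inverse_eq_divide)
qed

lemma inv_pow_deriv2:
  fixes a x :: real
  assumes "x + a \<noteq> 0"
  shows "((\<lambda>x. 1 / (x + a) ^ k) has_real_derivative (- real k / (x + a) ^ Suc k)) (at x within S)"
proof -
  have alg: "- (real k * (1 * y ^ (k - Suc 0)) * inverse ((y ^ k) ^ Suc (Suc 0))) = - real k / y ^ Suc k"
    if "y \<noteq> 0" for y :: real
    using that by (cases k) (simp_all add: field_simps)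
  have d: "((\<lambda>x. (x + a) ^ k) has_real_derivative real k * (1 * (x + a) ^ (k - Suc 0))) (at x within S)"
    by (intro DERIV_power derivative_eq_intros) auto
  have "((\<lambda>x. inverse ((x + a) ^ k)) has_real_derivative
         - (real k * (1 * (x + a) ^ (k - Suc 0)) * inverse (((x + a) ^ k) ^ Suc (Suc 0)))) (at x within S)"
    using assms by (intro DERIV_inverse_fun[OF d]) auto
  then show ?thesis using alg[of "x + a"] assms by (simp add: inverse_eq_divide)
qed

lemma nonint_ball:
  fixes t :: real
  assumes t: "t \<notin> \<int>"
  shows "\<exists>d>0. \<forall>x\<in>ball t d. x \<notin> \<int>"
proof -
  have a: "of_int \<lfloor>t\<rfloor> < t" using t by (metis Ints_of_int floor_correct order_le_less)
  have b: "t < of_int \<lfloor>t\<rfloor> + 1" by linarith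
  show ?thesis
  proof (intro exI[of _ "min (t - of_int \<lfloor>t\<rfloor>) (of_int \<lfloor>t\<rfloor> + 1 - t)"] conjI ballI)
    show "0 < min (t - of_int \<lfloor>t\<rfloor>) (of_int \<lfloor>t\<rfloor> + 1 - t)" using a b by simp
    fix x assume "x \<in> ball t (min (t - of_int \<lfloor>t\<rfloor>) (of_int \<lfloor>t\<rfloor> + 1 - t))"
    then have x: "of_int \<lfloor>t\<rfloor> < x" "x < of_int \<lfloor>t\<rfloor> + 1" by (auto simp: dist_real_def)
    show "x \<notin> \<int>"
    proof
      assume "x \<in> \<int>" then obtain n where n: "x = of_int n" by (auto elim: Ints_cases)
      with x have "\<lfloor>t\<rfloor> < n" "n < \<lfloor>t\<rfloor> + 1" by linarith+
      then show False by linarith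
    qed
  qed
qed

lemma nonint_ne:
  fixes x :: real
  assumes "x \<notin> \<int>"
  shows "x \<noteq> real j" "x \<noteq> - real j - 1" "x - real j \<noteq> 0" "x + real j + 1 \<noteq> 0"
proof -
  have "real j \<in> \<int>" by simp
  moreover have "- real j - 1 \<in> \<int>" by simp
  ultimately show "x \<noteq> real j" "x \<noteq> - real j - 1" using assms by auto
  then show "x - real j \<noteq> 0" "x + real j + 1 \<noteq> 0" by linarith+
qed

lemma G_deriv:
  assumes k: "2 \<le> k" and t: "t \<notin> \<int>"
  shows "(G k has_real_derivative (- real k * G (Suc k) t)) (at t)"
proof -
  obtain d where d: "d > 0" "\<forall>x\<in>ball t d. x \<notin> \<int>" using nonint_ball[OF t] by blast
  define S where "S = ball t (min d 1)"
  define f where "f j x = 1 / (x - real j) ^ k + 1 / (x + real j + 1) ^ k" for j x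
  define f' where "f' j x = - real k / (x - real j) ^ Suc k + - real k / (x + real j + 1) ^ Suc k" for j x
  have SZ: "x \<notin> \<int>" if "x \<in> S" for x using d that by (auto simp: S_def)
  have der: "(f j has_field_derivative f' j x) (at x within S)" if "x \<in> S" for j x
  proof -
    have x: "x \<noteq> real j" "x \<noteq> - real j - 1" using nonint_ne[OF SZ[OF that]] by auto
    have x2: "x + (real j + 1) \<noteq> 0" using x by linarith
    have e: "\<And>y. y + real j + 1 = y + (real j + 1)" by simp
    show ?thesis unfolding f_def f'_def e
      by (intro derivative_intros inv_pow_deriv inv_pow_deriv2 x x2)
  qed
  have unif: "uniformly_convergent_on S (\<lambda>n x. \<Sum>i<n. f' i x)"
  proof (rule Weierstrass_m_test'_ev)
    show "summable (\<lambda>j. real k * (4 * inverse (real j ^ 2)) + real k * (4 * inverse (real j ^ 2)))"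
      by (rule summable_add[OF summable_mult[OF inv_sq_summable] summable_mult[OF inv_sq_summable]])
    have ev: "eventually (\<lambda>j. 2 * (\<bar>t\<bar> + 1) + 2 \<le> real j) sequentially" by (rule ev_ge)
    show "\<forall>\<^sub>F j in sequentially. \<forall>x\<in>S. norm (f' j x) \<le>
            real k * (4 * inverse (real j ^ 2)) + real k * (4 * inverse (real j ^ 2))"
      using ev
    proof eventually_elim
      case (elim j)
      show ?case
      proof
        fix x assume "x \<in> S"
        then have xb: "\<bar>x\<bar> \<le> \<bar>t\<bar> + 1" by (auto simp: S_def dist_real_def)
        have b1: "\<bar>1 / (x - real j) ^ Suc k\<bar> \<le> 4 * inverse (real j ^ 2)"
          by (rule term_bound(1)[OF xb elim]) (use k in simp)
        have b2: "\<bar>1 / (x + real j + 1) ^ Suc k\<bar> \<le> 4 * inverse (real j ^ 2)"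
          by (rule term_bound(2)[OF xb elim]) (use k in simp)
        have "norm (f' j x) \<le> \<bar>- real k / (x - real j) ^ Suc k\<bar> + \<bar>- real k / (x + real j + 1) ^ Suc k\<bar>"
          unfolding f'_def real_norm_def by (rule abs_triangle_ineq)
        also have "\<dots> = real k * \<bar>1 / (x - real j) ^ Suc k\<bar> + real k * \<bar>1 / (x + real j + 1) ^ Suc k\<bar>"
          by simp
        also have "\<dots> \<le> real k * (4 * inverse (real j ^ 2)) + real k * (4 * inverse (real j ^ 2))"
          using b1 b2 by (intro add_mono mult_left_mono) auto
        finally show "norm (f' j x) \<le> real k * (4 * inverse (real j ^ 2)) + real k * (4 * inverse (real j ^ 2))" .
      qed
    qed
  qed
  have tS: "t \<in> S" using d by (simp add: S_def)
  have int: "t \<in> interior S" using tS by (simp add: S_def)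
  have sumt: "summable (\<lambda>n. f n t)" using G_sums[OF k, of t] by (simp add: f_def sums_summable)
  have D: "((\<lambda>x. \<Sum>n. f n x) has_field_derivative (\<Sum>n. f' n t)) (at t)"
    by (rule has_field_derivative_series'(2)[OF convex_ball[of t "min d 1", folded S_def] der unif tS sumt int])
  have eG: "(\<lambda>x. \<Sum>n. f n x) = G k" 
    using G_sums[OF k] by (intro ext) (simp add: f_def sums_iff)
  have "(\<lambda>n. - real k * (1 / (t - real n) ^ Suc k + 1 / (t + real n + 1) ^ Suc k)) sums (- real k * G (Suc k) t)"
    using G_sums[of "Suc k" t] k by (intro sums_mult) auto
  then have "(\<Sum>n. f' n t) = - real k * G (Suc k) t"
    by (simp add: f'_def sums_iff algebra_simps)
  then show ?thesis using D eG by simp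
qed



lemma G_shift: "G k (t + of_int m) = G k t"
  unfolding G_def
  by (rule infsum_reindex_bij_witness[of UNIV "\<lambda>n. n + m" "\<lambda>n. n - m" UNIV]) (auto simp: algebra_simps)

lemma G_neg: "even k \<Longrightarrow> G k (- t) = G k t"
  unfolding G_def
proof (rule infsum_reindex_bij_witness[of UNIV "\<lambda>n. - n" "\<lambda>n. - n" UNIV])
  fix a :: int assume "even k"
  then obtain j where kj: "k = 2 * j" by (auto elim: evenE)
  have e: "t - of_int (- a) = - (- t - of_int a)" by simp
  have "(t - of_int (- a)) ^ k = (- t - of_int a) ^ k"
    by (simp only: e kj) (rule Power.power_minus_even)
  then show "1 / (t - of_int (- a)) ^ k = 1 / (- t - of_int a) ^ k" by simp
qed auto

lemma sin_nonint: "(t::real) \<notin> \<int> \<Longrightarrow> sin (pi * t) \<noteq> 0"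
  using sin_times_pi_eq_0[of t] by (simp add: mult.commute)

lemma half_nonint:
  fixes t :: real
  assumes "t \<notin> \<int>"
  shows "t / 2 \<notin> \<int>" "(t + 1) / 2 \<notin> \<int>"
proof -
  show "t / 2 \<notin> \<int>"
  proof
    assume "t / 2 \<in> \<int>" then obtain n where "t / 2 = of_int n" by (auto elim: Ints_cases)
    then have "t = of_int (2 * n)" by simp
    then show False using assms by simp
  qed
  show "(t + 1) / 2 \<notin> \<int>"
  proof
    assume "(t + 1) / 2 \<in> \<int>" then obtain n where "(t + 1) / 2 = of_int n" by (auto elim: Ints_cases)
    then have "t = of_int (2 * n - 1)" by simp
    then show False using assms by simp
  qed
qed

lemma G_dup: "G 2 (t / 2) + G 2 ((t + 1) / 2) = 4 * G 2 t"
proof -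
  define f where "f r = 1 / (t - of_int r) ^ 2" for r :: int
  have sf: "f summable_on A" for A unfolding f_def by (rule G_summable) simp
  have inj1: "inj (\<lambda>n::int. 2 * n)" by (auto simp: inj_on_def)
  have inj2: "inj (\<lambda>n::int. 2 * n - 1)" by (auto simp: inj_on_def)
  have q: "1 / y ^ 2 = 4 * (1 / (2 * y) ^ 2)" for y :: real
    by (simp add: power_mult_distrib)
  have e1: "G 2 (t / 2) = 4 * infsum f (range (\<lambda>n::int. 2 * n))"
  proof -
    have "G 2 (t / 2) = (\<Sum>\<^sub>\<infinity>n::int. 4 * f (2 * n))"
      unfolding G_def f_def
    proof (rule infsum_cong)
      fix n :: int
      have h: "2 * (t / 2 - of_int n) = t - of_int (2 * n)" by simp
      show "1 / (t / 2 - of_int n) ^ 2 = 4 * (1 / (t - of_int (2 * n)) ^ 2)"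
        by (subst h[symmetric]) (rule q)
    qed
    also have "\<dots> = 4 * (\<Sum>\<^sub>\<infinity>n::int. f (2 * n))" by (rule infsum_cmult_right')
    also have "(\<Sum>\<^sub>\<infinity>n::int. f (2 * n)) = infsum f (range (\<lambda>n::int. 2 * n))"
      using infsum_reindex[OF inj1, of f] by (simp add: o_def)
    finally show ?thesis .
  qed
  have e2: "G 2 ((t + 1) / 2) = 4 * infsum f (range (\<lambda>n::int. 2 * n - 1))"
  proof -
    have "G 2 ((t + 1) / 2) = (\<Sum>\<^sub>\<infinity>n::int. 4 * f (2 * n - 1))"
      unfolding G_def f_def
    proof (rule infsum_cong)
      fix n :: int
      have h: "2 * ((t + 1) / 2 - of_int n) = t - of_int (2 * n - 1)" by (simp add: field_simps)
      show "1 / ((t + 1) / 2 - of_int n) ^ 2 = 4 * (1 / (t - of_int (2 * n - 1)) ^ 2)"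
        by (subst h[symmetric]) (rule q)
    qed
    also have "\<dots> = 4 * (\<Sum>\<^sub>\<infinity>n::int. f (2 * n - 1))" by (rule infsum_cmult_right')
    also have "(\<Sum>\<^sub>\<infinity>n::int. f (2 * n - 1)) = infsum f (range (\<lambda>n::int. 2 * n - 1))"
      using infsum_reindex[OF inj2, of f] by (simp add: o_def)
    finally show ?thesis .
  qed
  have U: "range (\<lambda>n::int. 2 * n) \<union> range (\<lambda>n::int. 2 * n - 1) = UNIV"
  proof safe
    fix x :: int assume "x \<notin> range (\<lambda>n::int. 2 * n - 1)"
    then have "\<not> odd x" by (metis (no_types, lifting) oddE diff_add_cancel rangeI add.commute
        add_diff_cancel_left' mult_2 dvd_def)
    then show "x \<in> range (\<lambda>n::int. 2 * n)" by (auto elim: evenE)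
  qed auto
  have Dj: "range (\<lambda>n::int. 2 * n) \<inter> range (\<lambda>n::int. 2 * n - 1) = {}" by auto presburger
  have "G 2 t = infsum f (range (\<lambda>n::int. 2 * n)) + infsum f (range (\<lambda>n::int. 2 * n - 1))"
    unfolding G_def f_def[symmetric]
    using infsum_Un_disjoint[OF sf sf Dj] U by simp
  then show ?thesis using e1 e2 by simp
qed

lemma sin_dup:
  fixes t :: real
  assumes "t \<notin> \<int>"
  shows "(pi / sin (pi * (t / 2))) ^ 2 + (pi / sin (pi * ((t + 1) / 2))) ^ 2 = 4 * (pi / sin (pi * t)) ^ 2"
proof -
  define s where "s = sin (pi * t / 2)"
  define c where "c = cos (pi * t / 2)"
  have st: "sin (pi * t) = 2 * s * c" unfolding s_def c_def using sin_double[of "pi * t / 2"] by simp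
  have "sin (pi * t) \<noteq> 0" by (rule sin_nonint[OF assms])
  then have nz: "s \<noteq> 0" "c \<noteq> 0" using st by auto
  have e2: "sin (pi * ((t + 1) / 2)) = c"
  proof -
    have "sin (pi * ((t + 1) / 2)) = sin (pi * t / 2 + pi / 2)"
      by (rule arg_cong[where f=sin]) (simp add: field_simps)
    also have "\<dots> = c" by (simp add: sin_add c_def)
    finally show ?thesis .
  qed
  have e1: "sin (pi * (t / 2)) = s" by (simp add: s_def)
  have sc: "s ^ 2 + c ^ 2 = 1" unfolding s_def c_def by simp
  have "(pi / s) ^ 2 + (pi / c) ^ 2 = pi ^ 2 * (s ^ 2 + c ^ 2) / (s ^ 2 * c ^ 2)"
    using nz by (simp add: field_simps power2_eq_square)
  also have "\<dots> = 4 * (pi / (2 * s * c)) ^ 2" using nz sc by (simp add: field_simps power2_eq_square)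
  finally show ?thesis using e1 e2 st by simp
qed



lemma sin_est:
  fixes x :: real
  assumes x: "0 < x" "x \<le> pi / 2"
  shows "0 \<le> 1 / sin x ^ 2 - 1 / x ^ 2" "1 / sin x ^ 2 - 1 / x ^ 2 \<le> 9 / 2"
proof -
  have pi: "pi \<le> 63 / 20" using pi_approx(2) by simp
  have x2: "x \<le> 8 / 5" using x pi by linarith
  have sle: "sin x \<le> x" using x by (intro sin_x_le_x) auto
  have spos: "0 < sin x" using x pi_gt_zero by (intro sin_gt_zero) linarith+
  have sc: "(\<Sum>m<4. sin_coeff m * x ^ m) = x - x ^ 3 / 6"
    by (simp add: sin_coeff_def eval_nat_numeral) presburger
  have mac: "\<bar>sin x - (x - x ^ 3 / 6)\<bar> \<le> x ^ 4 / 24"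
  proof -
    have a4: "\<bar>x\<bar> ^ 4 = x ^ 4" using x by simp
    have fa: "(fact 4 :: real) = 24" by (simp add: eval_nat_numeral)
    have f4: "inverse (fact 4 :: real) * \<bar>x\<bar> ^ 4 = x ^ 4 / 24"
      unfolding a4 fa by (simp add: field_simps)
    show ?thesis using Maclaurin_sin_bound[of x 4] unfolding sc f4 .
  qed
  have x4: "x ^ 4 / 24 \<le> x ^ 3 / 12"
  proof -
    have "x ^ 4 = x ^ 3 * x" by (simp add: eval_nat_numeral)
    also have "\<dots> \<le> x ^ 3 * 2" using x2 x by (intro mult_left_mono) auto
    finally show ?thesis by simp
  qed
  have slow: "x - sin x \<le> x ^ 3 / 4" using mac x4 by linarith
  have x3: "x ^ 3 / 4 \<le> 2 * x / 3"
  proof -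
    have "x ^ 3 = x * x ^ 2" by (simp add: eval_nat_numeral)
    also have "\<dots> \<le> x * (64 / 25)"
    proof -
      have h0: "x ^ 2 \<le> (8 / 5) ^ 2" using x2 x by (intro power_mono) auto
      have h1: "x ^ 2 \<le> 64 / 25" using h0 by (simp add: power_divide)
      show ?thesis by (rule mult_left_mono[OF h1]) (use x in simp)
    qed
    finally have "x ^ 3 \<le> x * (64 / 25)" .
    then show ?thesis using x by linarith
  qed
  have s3: "x / 3 \<le> sin x" using slow x3 by linarith
  have num: "x ^ 2 - sin x ^ 2 \<le> x ^ 4 / 2"
  proof -
    have "x ^ 2 - sin x ^ 2 = (x - sin x) * (x + sin x)" by (simp add: power2_eq_square algebra_simps)
    also have "\<dots> \<le> (x ^ 3 / 4) * (2 * x)" using slow sle spos x by (intro mult_mono) auto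
    also have "\<dots> = x ^ 4 / 2" by (simp add: eval_nat_numeral)
    finally show ?thesis .
  qed
  have den: "x ^ 4 / 9 \<le> x ^ 2 * sin x ^ 2"
  proof -
    have "(x / 3) ^ 2 \<le> sin x ^ 2" using s3 x by (intro power_mono) auto
    then have "x ^ 2 * (x / 3) ^ 2 \<le> x ^ 2 * sin x ^ 2" by (intro mult_left_mono) auto
    then show ?thesis by (simp add: eval_nat_numeral power_divide)
  qed
  have eq: "1 / sin x ^ 2 - 1 / x ^ 2 = (x ^ 2 - sin x ^ 2) / (x ^ 2 * sin x ^ 2)"
    using x spos by (simp add: field_simps)
  have dpos: "0 < x ^ 2 * sin x ^ 2" using x spos by simp
  show "0 \<le> 1 / sin x ^ 2 - 1 / x ^ 2"
    unfolding eq using sle spos dpos by (intro divide_nonneg_pos) (auto intro: power_mono)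
  have "(x ^ 2 - sin x ^ 2) \<le> 9 / 2 * (x ^ 2 * sin x ^ 2)" using num den by linarith
  then show "1 / sin x ^ 2 - 1 / x ^ 2 \<le> 9 / 2"
    unfolding eq using dpos by (simp add: divide_le_eq)
qed



lemma one_div_le:
  fixes a b :: real
  assumes "0 < a" "a \<le> b"
  shows "1 / b \<le> 1 / a"
  using le_imp_inverse_le[OF assms(2,1)] by (simp add: inverse_eq_divide)

lemma E_core:
  fixes u :: real
  assumes u: "0 < u" "u \<le> 1 / 2"
  shows "- 4 \<le> (pi / sin (pi * u)) ^ 2 - 1 / u ^ 2 - 1 / (u - 1) ^ 2"
    "(pi / sin (pi * u)) ^ 2 - 1 / u ^ 2 - 1 / (u - 1) ^ 2 \<le> 45"
proof -
  define x where "x = pi * u"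
  have x: "0 < x" "x \<le> pi / 2" using u by (auto simp: x_def)
  have e: "(pi / sin (pi * u)) ^ 2 - 1 / u ^ 2 = pi ^ 2 * (1 / sin x ^ 2 - 1 / x ^ 2)"
  proof -
    have h1: "pi ^ 2 * (1 / sin x ^ 2 - 1 / x ^ 2) = pi ^ 2 / sin x ^ 2 - pi ^ 2 / x ^ 2"
      by (simp add: right_diff_distrib)
    have h2: "pi ^ 2 / x ^ 2 = 1 / u ^ 2" using u by (simp add: x_def power_mult_distrib)
    have h3: "pi ^ 2 / sin x ^ 2 = (pi / sin (pi * u)) ^ 2" by (simp add: x_def power_divide)
    show ?thesis unfolding h1 h2 h3 ..
  qed
  have pi2: "pi ^ 2 \<le> 10"
  proof -
    have "pi \<le> 63 / 20" using pi_approx(2) by simp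
    then have "pi ^ 2 \<le> (63 / 20) ^ 2" by (intro power_mono) auto
    then show ?thesis by (simp add: power_divide)
  qed
  have a: "0 \<le> pi ^ 2 * (1 / sin x ^ 2 - 1 / x ^ 2)" using sin_est(1)[OF x] by simp
  have b: "pi ^ 2 * (1 / sin x ^ 2 - 1 / x ^ 2) \<le> 10 * (9 / 2)"
    using sin_est(2)[OF x] sin_est(1)[OF x] pi2 by (intro mult_mono) auto
  have c1: "0 \<le> 1 / (u - 1) ^ 2" by simp
  have c2: "1 / (u - 1) ^ 2 \<le> 4"
  proof -
    have "(1 / 2) ^ 2 \<le> (u - 1) ^ 2"
    proof -
      have "(1 / 2) ^ 2 \<le> (1 - u) ^ 2" using u by (intro power_mono) auto
      also have "(1 - u) ^ 2 = (u - 1) ^ 2" by (simp add: power2_commute)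
      finally show ?thesis .
    qed
    then have "1 / (u - 1) ^ 2 \<le> 1 / (1 / 2) ^ 2" by (intro one_div_le) auto
    also have "1 / (1 / 2 :: real) ^ 2 = 4" by (simp add: power_divide)
    finally show ?thesis .
  qed
  show "- 4 \<le> (pi / sin (pi * u)) ^ 2 - 1 / u ^ 2 - 1 / (u - 1) ^ 2" using e a c2 by linarith
  show "(pi / sin (pi * u)) ^ 2 - 1 / u ^ 2 - 1 / (u - 1) ^ 2 \<le> 45" using e b c1 by linarith
qed

lemma E_bound:
  fixes u :: real
  assumes u: "0 < u" "u < 1"
  shows "\<bar>(pi / sin (pi * u)) ^ 2 - 1 / u ^ 2 - 1 / (u - 1) ^ 2\<bar> \<le> 45"
proof (cases "u \<le> 1 / 2")
  case True
  then show ?thesis using E_core[of u] u by (simp add: abs_le_iff)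
next
  case False
  define w where "w = 1 - u"
  have w: "0 < w" "w \<le> 1 / 2" using u False by (auto simp: w_def)
  have s: "sin (pi * u) = sin (pi * w)"
  proof -
    have "pi * u = pi - pi * w" by (simp add: w_def algebra_simps)
    then show ?thesis by simp
  qed
  have e1: "1 / u ^ 2 = 1 / (w - 1) ^ 2" by (simp add: w_def power2_commute)
  have e2: "1 / (u - 1) ^ 2 = 1 / w ^ 2" by (simp add: w_def power2_commute)
  have "(pi / sin (pi * u)) ^ 2 - 1 / u ^ 2 - 1 / (u - 1) ^ 2
      = (pi / sin (pi * w)) ^ 2 - 1 / w ^ 2 - 1 / (w - 1) ^ 2" unfolding s e1 e2 by simp
  then show ?thesis using E_core[OF w] by (simp add: abs_le_iff)
qed

lemma G2_split:
  fixes u :: real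
  assumes u: "0 < u" "u < 1"
  shows "\<exists>R. G 2 u = 1 / u ^ 2 + 1 / (u - 1) ^ 2 + R \<and> 0 \<le> R \<and> R \<le> 4 * G 2 0"
proof -
  define f where "f r = 1 / (u - of_int r) ^ 2" for r :: int
  define R where "R = infsum f (UNIV - {0, 1})"
  have sf: "f summable_on A" for A unfolding f_def by (rule G_summable) simp
  have "G 2 u = infsum f ({0, 1} \<union> (UNIV - {0, 1}))" unfolding G_def f_def by simp
  also have "\<dots> = infsum f {0, 1} + R" unfolding R_def by (rule infsum_Un_disjoint[OF sf sf]) auto
  also have "infsum f {0, 1} = 1 / u ^ 2 + 1 / (u - 1) ^ 2" by (simp add: f_def)
  finally have eq: "G 2 u = 1 / u ^ 2 + 1 / (u - 1) ^ 2 + R" .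
  have R0: "0 \<le> R" unfolding R_def f_def by (intro infsum_nonneg) simp
  define g where "g r = 4 * (1 / (0 - of_int r) ^ 2 :: real)" for r :: int
  have sg: "g summable_on A" for A
    unfolding g_def by (intro summable_on_cmult_right) (rule G_summable, simp)
  have pt: "f r \<le> g r" if r: "r \<in> UNIV - {0, 1}" for r
  proof -
    have r': "r \<ge> 2 \<or> r \<le> -1" using r by auto
    have lb: "(of_int r / 2) ^ 2 \<le> (u - of_int r) ^ 2"
    proof -
      have "\<bar>of_int r / 2\<bar> \<le> \<bar>u - of_int r\<bar>"
      proof (cases "r \<ge> 2")
        case True
        then have "(2::real) \<le> of_int r" by simp
        then show ?thesis using u by (simp add: abs_if)
      next
        case False
        then have "of_int r \<le> (-1::real)" using r' by simp
        then show ?thesis using u by (simp add: abs_if)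
      qed
      then show ?thesis by (metis power2_abs abs_ge_zero power_mono)
    qed
    have pos: "0 < (of_int r / 2 :: real) ^ 2" using r by simp
    have "f r \<le> 1 / (of_int r / 2) ^ 2" unfolding f_def using lb pos by (intro one_div_le) auto
    also have "\<dots> = g r" by (simp add: g_def power_divide)
    finally show ?thesis .
  qed
  have "R \<le> infsum g (UNIV - {0, 1})" unfolding R_def by (intro infsum_mono sf sg pt)
  also have "\<dots> \<le> infsum g UNIV"
    by (intro infsum_mono2 sg) (auto simp: g_def)
  also have "infsum g UNIV = 4 * G 2 0" unfolding g_def G_def by (rule infsum_cmult_right')
  finally show ?thesis using eq R0 by blast
qed

lemma sin_sq_shift: "(pi / sin (pi * (u + of_int n))) ^ 2 = (pi / sin (pi * u)) ^ 2"
proof -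
  have s0: "sin (of_int n * pi) = 0" by (simp add: sin_times_pi_eq_0)
  have c1: "cos (of_int n * pi) ^ 2 = 1" using sin_cos_squared_add[of "of_int n * pi"] s0 by simp
  have "sin (pi * (u + of_int n)) = sin (pi * u) * cos (of_int n * pi)"
    by (simp add: distrib_left sin_add s0 mult.commute)
  then have "sin (pi * (u + of_int n)) ^ 2 = sin (pi * u) ^ 2"
    by (simp add: power_mult_distrib c1)
  then show ?thesis by (simp add: power_divide)
qed

lemma G2_csc:
  fixes t :: real
  assumes t: "t \<notin> \<int>"
  shows "G 2 t = (pi / sin (pi * t)) ^ 2"
proof -
  define D where "D t = G 2 t - (pi / sin (pi * t)) ^ 2" for t
  define B where "B = 4 * G 2 0 + 49"
  have bnd: "\<bar>D t\<bar> \<le> B" if t: "t \<notin> \<int>" for t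
  proof -
    define u where "u = t - of_int \<lfloor>t\<rfloor>"
    have u: "0 < u" "u < 1"
    proof -
      have "of_int \<lfloor>t\<rfloor> \<noteq> t" using t by (metis Ints_of_int)
      then show "0 < u" unfolding u_def using of_int_floor_le[of t] by (smt (verit))
      show "u < 1" unfolding u_def by linarith
    qed
    have tu: "t = u + of_int \<lfloor>t\<rfloor>" by (simp add: u_def)
    have g: "G 2 t = G 2 u" by (metis G_shift tu)
    have ss: "(pi / sin (pi * t)) ^ 2 = (pi / sin (pi * u)) ^ 2" by (metis sin_sq_shift tu)
    have "D t = D u" unfolding D_def g ss ..
    obtain R where R: "G 2 u = 1 / u ^ 2 + 1 / (u - 1) ^ 2 + R" "0 \<le> R" "R \<le> 4 * G 2 0"
      using G2_split[OF u] by blast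
    have "D u = R - ((pi / sin (pi * u)) ^ 2 - 1 / u ^ 2 - 1 / (u - 1) ^ 2)"
      unfolding D_def R(1) by simp
    then show ?thesis using E_bound[OF u] R(2,3) \<open>D t = D u\<close> unfolding B_def by (simp add: abs_le_iff)
  qed
  have fe: "4 * D t = D (t / 2) + D ((t + 1) / 2)" if "t \<notin> \<int>" for t
    using G_dup[of t] sin_dup[OF that] unfolding D_def by simp
  have ind: "\<forall>t. t \<notin> \<int> \<longrightarrow> \<bar>D t\<bar> \<le> B / 2 ^ n" for n
  proof (induction n)
    case 0
    then show ?case using bnd by simp
  next
    case (Suc n)
    show ?case
    proof (intro allI impI)
      fix t :: real assume t: "t \<notin> \<int>"
      have h1: "\<bar>D (t / 2)\<bar> \<le> B / 2 ^ n" using Suc half_nonint(1)[OF t] by blast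
      have h2: "\<bar>D ((t + 1) / 2)\<bar> \<le> B / 2 ^ n" using Suc half_nonint(2)[OF t] by blast
      have q: "4 * \<bar>D t\<bar> \<le> \<bar>D (t / 2)\<bar> + \<bar>D ((t + 1) / 2)\<bar>" using fe[OF t] by (smt (verit))
      have p: "(0::real) < 2 ^ n" by simp
      have h1': "2 ^ n * \<bar>D (t / 2)\<bar> \<le> B" using h1 p by (simp add: field_simps)
      have h2': "2 ^ n * \<bar>D ((t + 1) / 2)\<bar> \<le> B" using h2 p by (simp add: field_simps)
      have "2 ^ n * (4 * \<bar>D t\<bar>) \<le> 2 ^ n * (\<bar>D (t / 2)\<bar> + \<bar>D ((t + 1) / 2)\<bar>)"
        using q p by (intro mult_left_mono) auto
      then have "2 ^ n * (4 * \<bar>D t\<bar>) \<le> 2 * B" using h1' h2' by (simp add: algebra_simps)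
      then have "\<bar>D t\<bar> * 2 ^ Suc n \<le> B" by (simp add: algebra_simps)
      then show "\<bar>D t\<bar> \<le> B / 2 ^ Suc n" using p by (simp add: field_simps)
    qed
  qed
  have lim: "(\<lambda>n. B / 2 ^ n) \<longlonglongrightarrow> 0" by (rule LIMSEQ_divide_realpow_zero) simp
  have "\<bar>D t\<bar> \<le> 0" by (rule LIMSEQ_le_const[OF lim]) (use ind t in blast)
  then show ?thesis unfolding D_def by simp
qed



lemma esym_zero: "esym_sq n 0 = 1"
proof -
  have "A = {}" if "A \<subseteq> {1..n - 1}" "card A = 0" for A
    using that finite_subset[OF that(1) finite_atLeastAtMost] by simp
  then have "{A. A \<subseteq> {1..n - 1} \<and> card A = 0} = {{}}" by auto
  then show ?thesis by (simp add: esym_sq_def)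
qed

lemma esym_big:
  assumes "n \<le> k" "1 \<le> n"
  shows "esym_sq n k = 0"
proof -
  have False if A: "A \<subseteq> {1..n - 1}" "card A = k" for A
  proof -
    have "card A \<le> card {1..n - 1}" using A(1) by (intro card_mono) auto
    then show False using A assms by simp
  qed
  then have eqS: "{A. A \<subseteq> {1..n - 1} \<and> card A = k} = {}" by blast
  show ?thesis unfolding esym_sq_def eqS by simp
qed

lemma esym_rec:
  assumes n: "1 \<le> n" and k: "1 \<le> k"
  shows "esym_sq (Suc n) k = esym_sq n k + real n ^ 2 * esym_sq n (k - 1)"
proof -
  define S where "S m j = {A. A \<subseteq> {1..m} \<and> card A = j}" for m j :: nat
  have fin: "finite (S m j)" for m j
    unfolding S_def by (rule finite_subset[of _ "Pow {1..m}"]) auto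
  have e1: "esym_sq (Suc n) k = (\<Sum>A\<in>S n k. \<Prod>i\<in>A. real i ^ 2)" by (simp add: esym_sq_def S_def)
  have e2: "esym_sq n j = (\<Sum>A\<in>S (n - 1) j. \<Prod>i\<in>A. real i ^ 2)" for j by (simp add: esym_sq_def S_def)
  have nn: "n \<notin> B" if "B \<in> S (n - 1) j" for B j using that n by (auto simp: S_def)
  have finB: "finite B" if "B \<in> S m j" for B m j using that by (auto simp: S_def intro: finite_subset)
  have U: "S n k = S (n - 1) k \<union> insert n ` S (n - 1) (k - 1)"
  proof safe
    fix A assume A: "A \<in> S n k" "A \<notin> insert n ` S (n - 1) (k - 1)"
    have fA: "finite A" using finB[OF A(1)] .
    show "A \<in> S (n - 1) k"
    proof (cases "n \<in> A")
      case True
      have "A - {n} \<in> S (n - 1) (k - 1)" using A(1) True fA by (auto simp: S_def)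
      moreover have "A = insert n (A - {n})" using True by auto
      ultimately show ?thesis using A(2) by blast
    next
      case False
      have "A \<subseteq> {1..n - 1}"
      proof
        fix x assume "x \<in> A"
        with A(1) False have "x \<in> {1..n}" "x \<noteq> n" by (auto simp: S_def)
        then show "x \<in> {1..n - 1}" by auto
      qed
      then show ?thesis using A(1) by (auto simp: S_def)
    qed
  next
    fix A assume "A \<in> S (n - 1) k"
    then have "A \<subseteq> {1..n - 1}" "card A = k" by (auto simp: S_def)
    moreover have "{1..n - 1} \<subseteq> {1..n}" by auto
    ultimately show "A \<in> S n k" unfolding S_def by blast
  next
    fix B assume B: "B \<in> S (n - 1) (k - 1)"
    have c: "card (insert n B) = Suc (card B)" using nn[OF B] finB[OF B] by simp
    have b1: "B \<subseteq> {1..n - 1}" and b2: "card B = k - 1" using B by (auto simp: S_def)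
    have b3: "{1..n - 1} \<subseteq> {1..n}" "n \<in> {1..n}" using n by auto
    have "insert n B \<subseteq> {1..n}" using b1 b3 by blast
    moreover have "card (insert n B) = k" using c b2 k by simp
    ultimately have "insert n B \<subseteq> {1..n}" "card (insert n B) = k" by auto
    then show "insert n B \<in> S n k" unfolding S_def by blast
  qed
  have Dj: "S (n - 1) k \<inter> insert n ` S (n - 1) (k - 1) = {}" using nn by auto
  have inj: "inj_on (insert n) (S (n - 1) (k - 1))"
    using nn by (intro inj_onI) (metis insert_ident)
  have "esym_sq (Suc n) k = (\<Sum>A\<in>S (n - 1) k. \<Prod>i\<in>A. real i ^ 2) +
          (\<Sum>A\<in>insert n ` S (n - 1) (k - 1). \<Prod>i\<in>A. real i ^ 2)"
    unfolding e1 U by (rule sum.union_disjoint) (use fin Dj in auto)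
  also have "(\<Sum>A\<in>insert n ` S (n - 1) (k - 1). \<Prod>i\<in>A. real i ^ 2) =
        (\<Sum>B\<in>S (n - 1) (k - 1). \<Prod>i\<in>insert n B. real i ^ 2)"
    by (rule sum.reindex[OF inj, unfolded o_def])
  also have "\<dots> = (\<Sum>B\<in>S (n - 1) (k - 1). real n ^ 2 * (\<Prod>i\<in>B. real i ^ 2))"
    by (intro sum.cong refl) (simp add: prod.insert[OF finB nn])
  also have "\<dots> = real n ^ 2 * esym_sq n (k - 1)" by (simp add: e2 sum_distrib_left)
  finally show ?thesis by (simp add: e2)
qed



definition cs :: "nat \<Rightarrow> real \<Rightarrow> real" where
  "cs n t = (pi / sin (pi * t)) ^ (2 * n)"

lemma q_deriv:
  assumes "sin (pi * t) \<noteq> 0"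
  shows "((\<lambda>t. pi / sin (pi * t)) has_real_derivative (- pi * pi * cos (pi * t) / sin (pi * t) ^ 2)) (at t)"
  apply (rule derivative_eq_intros refl)+
  using assms apply simp
  using assms apply (simp add: power2_eq_square)
  done

lemma cot_deriv:
  assumes "sin (pi * t) \<noteq> 0"
  shows "((\<lambda>t. cos (pi * t) / sin (pi * t)) has_real_derivative (- pi / sin (pi * t) ^ 2)) (at t)"
proof -
  have "((\<lambda>t. cos (pi * t) / sin (pi * t)) has_real_derivative
      ((- sin (pi * t) * (pi * 1)) * sin (pi * t) - cos (pi * t) * (cos (pi * t) * (pi * 1))) / (sin (pi * t) * sin (pi * t))) (at t)"
    by (intro DERIV_divide derivative_intros assms DERIV_cmult DERIV_ident)
  moreover have "((- sin (pi * t) * (pi * 1)) * sin (pi * t) - cos (pi * t) * (cos (pi * t) * (pi * 1))) / (sin (pi * t) * sin (pi * t))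
      = - pi / sin (pi * t) ^ 2"
  proof -
    have "(- sin (pi * t) * (pi * 1)) * sin (pi * t) - cos (pi * t) * (cos (pi * t) * (pi * 1))
        = - pi * (sin (pi * t) ^ 2 + cos (pi * t) ^ 2)" by (simp only: power2_eq_square) algebra
    also have "\<dots> = - pi" unfolding sin_cos_squared_add by simp
    finally show ?thesis by (simp add: power2_eq_square)
  qed
  ultimately show ?thesis by simp
qed

lemma cs_deriv:
  assumes n: "1 \<le> n" and s: "sin (pi * t) \<noteq> 0"
  shows "(cs n has_real_derivative (- 2 * real n * pi * (cos (pi * t) / sin (pi * t)) * cs n t)) (at t)"
proof -
  have d: "((\<lambda>t. (pi / sin (pi * t)) ^ (2 * n)) has_real_derivative
      of_nat (2 * n) * ((- pi * pi * cos (pi * t) / sin (pi * t) ^ 2) * (pi / sin (pi * t)) ^ (2 * n - Suc 0))) (at t)"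
    by (rule DERIV_power[OF q_deriv[OF s]])
  obtain m where m: "2 * n = Suc m" using n by (metis Suc_pred mult_pos_pos nat_0_less_mult_iff zero_less_numeral less_le_trans zero_less_one not_gr0 le_numeral_extra(2))
  have "of_nat (2 * n) * ((- pi * pi * cos (pi * t) / sin (pi * t) ^ 2) * (pi / sin (pi * t)) ^ (2 * n - Suc 0))
      = - 2 * real n * pi * (cos (pi * t) / sin (pi * t)) * cs n t"
  proof -
    have hm: "real m = 2 * real n - 1" using arg_cong[OF m, of real] by simp
    show ?thesis unfolding cs_def m using s by (simp add: field_simps power2_eq_square hm)
  qed
  then show ?thesis using d by (simp add: cs_def[abs_def])
qed

lemma dcs_deriv:
  assumes n: "1 \<le> n" and s: "sin (pi * t) \<noteq> 0"
  shows "((\<lambda>t. - 2 * real n * pi * (cos (pi * t) / sin (pi * t)) * cs n t) has_real_derivative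
          (2 * real n * (2 * real n + 1) * cs (Suc n) t - 4 * real n ^ 2 * pi ^ 2 * cs n t)) (at t)"
proof -
  have d: "((\<lambda>t. - 2 * real n * pi * (cos (pi * t) / sin (pi * t)) * cs n t) has_real_derivative
      (- 2 * real n * pi) * ((- pi / sin (pi * t) ^ 2) * cs n t +
        (cos (pi * t) / sin (pi * t)) * (- 2 * real n * pi * (cos (pi * t) / sin (pi * t)) * cs n t))) (at t)"
  proof -
    have "((\<lambda>t. (cos (pi * t) / sin (pi * t)) * cs n t) has_real_derivative
      ((cos (pi * t) / sin (pi * t)) * (- 2 * real n * pi * (cos (pi * t) / sin (pi * t)) * cs n t) +
        (- pi / sin (pi * t) ^ 2) * cs n t)) (at t)"
      by (rule DERIV_mult'[OF cot_deriv[OF s] cs_deriv[OF n s]])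
    from DERIV_cmult[OF this, of "- 2 * real n * pi"] show ?thesis by (simp add: mult.assoc add.commute)
  qed
  define S where "S = sin (pi * t)"
  define C where "C = cos (pi * t)"
  define X where "X = cs n t"
  have sc: "C ^ 2 = 1 - S ^ 2" unfolding S_def C_def by (simp add: cos_squared_eq)
  have X1: "cs (Suc n) t = X * (pi / S) ^ 2"
  proof -
    have e: "2 * Suc n = 2 * n + 2" by simp
    show ?thesis unfolding X_def S_def cs_def e by (simp only: power_add)
  qed
  have S0: "S \<noteq> 0" using s by (simp add: S_def)
  have "(- 2 * real n * pi) * ((- pi / S ^ 2) * X + (C / S) * (- 2 * real n * pi * (C / S) * X))
      = 2 * real n * pi ^ 2 * X * (1 + 2 * real n * C ^ 2) / S ^ 2"
    using S0 by (simp add: field_simps power2_eq_square)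
  also have "\<dots> = 2 * real n * (2 * real n + 1) * (X * (pi / S) ^ 2) - 4 * real n ^ 2 * pi ^ 2 * X"
    unfolding sc using S0 by (simp add: field_simps power2_eq_square)
  finally show ?thesis using d unfolding X1 by (simp add: S_def C_def X_def)
qed



definition beta :: "nat \<Rightarrow> nat \<Rightarrow> real" where
  "beta n j = (4 * pi ^ 2) ^ (n - 1 - j) * esym_sq n (n - 1 - j) * fact (2 * j + 1) / fact (2 * n - 1)"

lemma fact_step: "(fact (2 * i + 3) :: real) = fact (2 * i + 1) * (real (2 * i + 2) * real (2 * i + 3))"
proof -
  have "2 * i + 3 = Suc (Suc (2 * i + 1))" by simp
  then show ?thesis by (simp only: fact_Suc) (simp add: algebra_simps)
qed

lemma coef_id:
  assumes j: "j \<le> Suc m"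
  shows "((if j = 0 then 0 else beta (Suc m) (j - 1) * (real (2 * j) * real (2 * j + 1))) +
          (if j < Suc m then 4 * real (Suc m) ^ 2 * pi ^ 2 * beta (Suc m) j else 0))
         / (2 * real (Suc m) * (2 * real (Suc m) + 1)) = beta (Suc (Suc m)) j"
proof -
  have f3: "(fact (2 * m + 3) :: real) = fact (2 * m + 1) * (2 * real (Suc m) * (2 * real (Suc m) + 1))"
    using fact_step[of m] by (simp add: algebra_simps)
  have fpos: "(0::real) < fact (2 * m + 1)" by simp
  have dpos: "(0::real) < 2 * real (Suc m) * (2 * real (Suc m) + 1)" by simp
  consider "j = 0" | i where "j = Suc i" "i < m" | "j = Suc m"
    using j by (metis Suc_le_lessD le_neq_implies_less less_Suc_eq_le not0_implies_Suc)
  then show ?thesis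
  proof cases
    case 1
    have E: "esym_sq (Suc (Suc m)) (Suc m) = real (Suc m) ^ 2 * esym_sq (Suc m) m"
      using esym_rec[of "Suc m" "Suc m"] esym_big[of "Suc m" "Suc m"] by simp
    have "4 * real (Suc m) ^ 2 * pi ^ 2 * beta (Suc m) 0 / (2 * real (Suc m) * (2 * real (Suc m) + 1))
        = beta (Suc (Suc m)) 0"
      unfolding beta_def using f3 fpos dpos
      by (simp add: E field_simps power_Suc)
    then show ?thesis using 1 by simp
  next
    case 2
    define k where "k = m - j"
    have mi: "m - i = Suc k" using 2 by (simp add: k_def)
    have E: "esym_sq (Suc (Suc m)) (Suc k) = esym_sq (Suc m) (Suc k) + real (Suc m) ^ 2 * esym_sq (Suc m) k"
      using esym_rec[of "Suc m" "Suc k"] by simp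
    have b1: "beta (Suc m) i = (4 * pi ^ 2) ^ Suc k * esym_sq (Suc m) (Suc k) * fact (2 * i + 1) / fact (2 * m + 1)"
      unfolding beta_def using mi by simp
    have b2: "beta (Suc m) j = (4 * pi ^ 2) ^ k * esym_sq (Suc m) k * fact (2 * i + 3) / fact (2 * m + 1)"
    proof -
      have jj: "2 * j + 1 = 2 * i + 3" using 2 by simp
      have e1: "Suc m - 1 - j = k" by (simp add: k_def)
      have e2: "2 * Suc m - 1 = 2 * m + 1" by simp
      show ?thesis unfolding beta_def jj e1 e2 ..
    qed
    have b3: "beta (Suc (Suc m)) j = (4 * pi ^ 2) ^ Suc k * esym_sq (Suc (Suc m)) (Suc k) * fact (2 * i + 3) / fact (2 * m + 3)"
    proof -
      have jj: "2 * j + 1 = 2 * i + 3" using 2 by simp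
      have e1: "Suc (Suc m) - 1 - j = Suc k" using 2 mi by (simp add: k_def)
      have e2: "2 * Suc (Suc m) - 1 = 2 * m + 3" by simp
      show ?thesis unfolding beta_def jj e1 e2 ..
    qed
    define F0 where "F0 = (fact (2 * i + 1) :: real)"
    define f where "f = (fact (2 * m + 1) :: real)"
    define X where "X = real (2 * i + 2) * real (2 * i + 3)"
    define P where "P = (4 * pi ^ 2) ^ k"
    define E1 where "E1 = esym_sq (Suc m) (Suc k)"
    define E0 where "E0 = esym_sq (Suc m) k"
    define D where "D = 2 * real (Suc m) * (2 * real (Suc m) + 1)"
    define M where "M = real (Suc m) ^ 2"
    have fi: "(fact (2 * i + 3) :: real) = F0 * X" unfolding F0_def X_def by (rule fact_step)
    have fm: "(fact (2 * m + 3) :: real) = f * D" unfolding f_def D_def by (rule f3)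
    have XX: "real (2 * j) * real (2 * j + 1) = X" unfolding X_def using 2 by simp
    have B1: "beta (Suc m) i = 4 * pi ^ 2 * P * E1 * F0 / f" unfolding b1 P_def E1_def F0_def f_def by simp
    have B2: "beta (Suc m) j = P * E0 * (F0 * X) / f" unfolding b2 fi P_def E0_def f_def by simp
    have B3: "beta (Suc (Suc m)) j = 4 * pi ^ 2 * P * (E1 + M * E0) * (F0 * X) / (f * D)"
      unfolding b3 fi fm E P_def E1_def E0_def M_def by simp
    have f0: "f \<noteq> 0" unfolding f_def by simp
    have d0: "D \<noteq> 0" unfolding D_def by simp
    have "(beta (Suc m) i * (real (2 * j) * real (2 * j + 1)) + 4 * real (Suc m) ^ 2 * pi ^ 2 * beta (Suc m) j)
          / (2 * real (Suc m) * (2 * real (Suc m) + 1)) = beta (Suc (Suc m)) j"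
      unfolding B1 B2 B3 XX D_def[symmetric] M_def[symmetric] using f0 d0
      by (simp add: field_simps)
    then show ?thesis using 2 by simp
  next
    case 3
    have "beta (Suc m) m * (real (2 * j) * real (2 * j + 1)) / (2 * real (Suc m) * (2 * real (Suc m) + 1))
        = beta (Suc (Suc m)) j"
    proof -
      have a: "beta (Suc m) m = 1" unfolding beta_def by (simp add: esym_zero)
      have b: "beta (Suc (Suc m)) j = 1" unfolding beta_def using 3 by (simp add: esym_zero)
      have c: "real (2 * j) * real (2 * j + 1) = 2 * real (Suc m) * (2 * real (Suc m) + 1)" using 3 by simp
      show ?thesis unfolding a b c using dpos by simp
    qed
    then show ?thesis using 3 by simp
  qed
qed



lemma combo:
  fixes g :: "nat \<Rightarrow> real"
  shows "((\<Sum>j<Suc m. beta (Suc m) j * (real (2 * j + 2) * real (2 * j + 3)) * g (Suc j)) +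
          4 * real (Suc m) ^ 2 * pi ^ 2 * (\<Sum>j<Suc m. beta (Suc m) j * g j))
         / (2 * real (Suc m) * (2 * real (Suc m) + 1)) = (\<Sum>j<Suc (Suc m). beta (Suc (Suc m)) j * g j)"
proof -
  define A where "A j = (if j = 0 then 0 else beta (Suc m) (j - 1) * (real (2 * j) * real (2 * j + 1)))" for j
  define B where "B j = (if j < Suc m then 4 * real (Suc m) ^ 2 * pi ^ 2 * beta (Suc m) j else 0)" for j
  define D where "D = 2 * real (Suc m) * (2 * real (Suc m) + 1)"
  have S1: "(\<Sum>j<Suc m. beta (Suc m) j * (real (2 * j + 2) * real (2 * j + 3)) * g (Suc j)) =
            (\<Sum>j<Suc (Suc m). A j * g j)"
    by (subst sum.lessThan_Suc_shift) (simp add: A_def algebra_simps)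
  have S2: "4 * real (Suc m) ^ 2 * pi ^ 2 * (\<Sum>j<Suc m. beta (Suc m) j * g j) = (\<Sum>j<Suc (Suc m). B j * g j)"
  proof -
    have "(\<Sum>j<Suc (Suc m). B j * g j) = (\<Sum>j<Suc m. B j * g j) + B (Suc m) * g (Suc m)"
      by (rule sum.lessThan_Suc)
    also have "B (Suc m) = 0" by (simp add: B_def)
    also have "(\<Sum>j<Suc m. B j * g j) = (\<Sum>j<Suc m. (4 * real (Suc m) ^ 2 * pi ^ 2) * (beta (Suc m) j * g j))"
      by (intro sum.cong refl) (simp add: B_def)
    also have "\<dots> = 4 * real (Suc m) ^ 2 * pi ^ 2 * (\<Sum>j<Suc m. beta (Suc m) j * g j)"
      by (rule sum_distrib_left[symmetric])
    finally show ?thesis by simp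
  qed
  have "(\<Sum>j<Suc (Suc m). A j * g j) + (\<Sum>j<Suc (Suc m). B j * g j) = (\<Sum>j<Suc (Suc m). (A j + B j) * g j)"
    by (simp add: sum.distrib algebra_simps)
  also have "\<dots> / D = (\<Sum>j<Suc (Suc m). ((A j + B j) / D) * g j)"
    unfolding sum_divide_distrib by (intro sum.cong refl) simp
  also have "\<dots> = (\<Sum>j<Suc (Suc m). beta (Suc (Suc m)) j * g j)"
  proof (intro sum.cong refl)
    fix j assume "j \<in> {..<Suc (Suc m)}"
    then have "j \<le> Suc m" by simp
    then show "(A j + B j) / D * g j = beta (Suc (Suc m)) j * g j"
      using coef_id[of j m] by (simp add: A_def B_def D_def)
  qed
  finally show ?thesis unfolding S1 S2 D_def .
qed



definition Fs :: "nat \<Rightarrow> real \<Rightarrow> real" where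
  "Fs n t = (\<Sum>j<n. beta n j * G (2 * j + 2) t)"
definition Fs1 :: "nat \<Rightarrow> real \<Rightarrow> real" where
  "Fs1 n t = (\<Sum>j<n. beta n j * (- real (2 * j + 2) * G (Suc (2 * j + 2)) t))"
definition Fs2 :: "nat \<Rightarrow> real \<Rightarrow> real" where
  "Fs2 n t = (\<Sum>j<n. beta n j * (- real (2 * j + 2) * (- real (Suc (2 * j + 2)) * G (Suc (Suc (2 * j + 2))) t)))"

lemma Fs_d1: "t \<notin> \<int> \<Longrightarrow> (Fs n has_real_derivative Fs1 n t) (at t)"
  unfolding Fs_def[abs_def] Fs1_def
  by (intro DERIV_sum DERIV_cmult G_deriv) auto

lemma Fs_d2: "t \<notin> \<int> \<Longrightarrow> (Fs1 n has_real_derivative Fs2 n t) (at t)"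
  unfolding Fs1_def[abs_def] Fs2_def
  by (intro DERIV_sum DERIV_cmult G_deriv) auto

lemma cs_eq: "t \<notin> \<int> \<Longrightarrow> cs (Suc m) t = Fs (Suc m) t"
proof (induction m arbitrary: t)
  case 0
  have "beta 1 0 = 1" unfolding beta_def by (simp add: esym_zero)
  then show ?case using G2_csc[OF 0] by (simp add: cs_def Fs_def numeral_2_eq_2)
next
  case (Suc m)
  define n where "n = Suc m"
  have n1: "1 \<le> n" by (simp add: n_def)
  have IH: "cs n y = Fs n y" if "y \<notin> \<int>" for y using Suc.IH[OF that] by (simp add: n_def)
  have t: "t \<notin> \<int>" by (rule Suc.prems)
  obtain d where d: "d > 0" "\<forall>x\<in>ball t d. x \<notin> \<int>" using nonint_ball[OF t] by blast
  define B where "B = ball t d"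
  have oB: "open B" by (simp add: B_def)
  have tB: "t \<in> B" using d by (simp add: B_def)
  have BZ: "x \<notin> \<int>" if "x \<in> B" for x using d that by (simp add: B_def)
  define dc where "dc x = - 2 * real n * pi * (cos (pi * x) / sin (pi * x)) * cs n x" for x
  have d1: "dc x = Fs1 n x" if x: "x \<in> B" for x
  proof -
    have a: "(cs n has_real_derivative dc x) (at x)"
      unfolding dc_def by (rule cs_deriv[OF n1 sin_nonint[OF BZ[OF x]]])
    have b: "(cs n has_real_derivative Fs1 n x) (at x)"
      by (rule has_field_derivative_transform_within_open[OF Fs_d1[OF BZ[OF x]] oB x])
         (use IH BZ in auto)
    show ?thesis using DERIV_unique[OF a b] .
  qed
  have a2: "(dc has_real_derivative (2 * real n * (2 * real n + 1) * cs (Suc n) t - 4 * real n ^ 2 * pi ^ 2 * cs n t)) (at t)"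
    unfolding dc_def[abs_def] by (rule dcs_deriv[OF n1 sin_nonint[OF t]])
  have b2: "(dc has_real_derivative Fs2 n t) (at t)"
    by (rule has_field_derivative_transform_within_open[OF Fs_d2[OF t] oB tB]) (use d1 in auto)
  have eq: "2 * real n * (2 * real n + 1) * cs (Suc n) t - 4 * real n ^ 2 * pi ^ 2 * cs n t = Fs2 n t"
    using DERIV_unique[OF a2 b2] .
  have pos: "0 < 2 * real n * (2 * real n + 1)" using n1 by simp
  have "cs (Suc n) t = (Fs2 n t + 4 * real n ^ 2 * pi ^ 2 * Fs n t) / (2 * real n * (2 * real n + 1))"
    using eq IH[OF t] pos by (simp add: field_simps)
  also have "Fs2 n t = (\<Sum>j<Suc m. beta (Suc m) j * (real (2 * j + 2) * real (2 * j + 3)) * G (2 * Suc j + 2) t)"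
    unfolding Fs2_def n_def by (intro sum.cong refl) (simp add: algebra_simps)
  also have "(\<dots> + 4 * real n ^ 2 * pi ^ 2 * Fs n t) / (2 * real n * (2 * real n + 1)) = Fs (Suc n) t"
    unfolding n_def Fs_def by (rule combo[of m "\<lambda>j. G (2 * j + 2) t"])
  finally show ?case by (simp add: n_def)
qed



lemma h_summable:
  assumes "even s" "2 \<le> s"
  shows "(\<lambda>r::int. 1 / (of_int r :: real) ^ s) summable_on A"
proof -
  have "(\<lambda>r::int. 1 / ((0::real) - of_int r) ^ s) summable_on A" by (rule G_summable) (use assms in simp)
  moreover have "(\<lambda>r::int. 1 / ((0::real) - of_int r) ^ s) = (\<lambda>r::int. 1 / (of_int r :: real) ^ s)"
    using assms(1) by (simp add: power_minus_even)
  ultimately show ?thesis by simp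
qed

lemma G0_h: "even s \<Longrightarrow> G s 0 = (\<Sum>\<^sub>\<infinity>r::int. 1 / (of_int r :: real) ^ s)"
  unfolding G_def by (simp add: power_minus_even)

lemma phi_image:
  fixes m :: nat
  assumes m: "1 \<le> m"
  shows "(\<lambda>(k, n). int k - 2 * int m * n) ` (({1..2 * m - 1} - {m}) \<times> UNIV) = {r. \<not> int m dvd r}"
proof (intro equalityI subsetI)
  fix x assume "x \<in> (\<lambda>(k, n). int k - 2 * int m * n) ` (({1..2 * m - 1} - {m}) \<times> UNIV)"
  then obtain p where p: "p \<in> ({1..2 * m - 1} - {m}) \<times> (UNIV :: int set)"
    "x = (\<lambda>(k, n). int k - 2 * int m * n) p" by (rule imageE)
  obtain k n where pk: "p = (k, n)" by (cases p)
  have k: "k \<in> {1..2 * m - 1} - {m}" and x: "x = int k - 2 * int m * n" using p pk by auto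
  have "\<not> int m dvd x"
  proof
    assume "int m dvd x"
    then have dv: "int m dvd int k - 2 * int m * n" using x by simp
  have "int m dvd 2 * int m * n" by simp
  then have "int m dvd int k" using dv by (metis dvd_add_right_iff diff_add_cancel add.commute)
  then have "m dvd k" by simp
  then obtain q where q: "k = m * q" by (auto elim: dvdE)
  have "q = 1"
  proof (rule ccontr)
    assume "q \<noteq> 1"
    then have "q = 0 \<or> q \<ge> 2" by auto
    then show False
    proof
      assume "q = 0" then show False using q k by simp
    next
      assume "q \<ge> 2" then have "m * 2 \<le> m * q" by (rule mult_le_mono2)
      moreover have "k \<le> 2 * m - 1" using k by simp
      ultimately show False using q m by linarith
    qed
  qed
  then show False using q k by simp
qed
  then show "x \<in> {r. \<not> int m dvd r}" by simp
next
  fix r :: int assume "r \<in> {r. \<not> int m dvd r}"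
  then have r: "\<not> int m dvd r" by simp
  define M where "M = 2 * int m"
  have M: "M > 0" using m by (simp add: M_def)
  define rho where "rho = r mod M"
  define d where "d = r div M"
  have rd: "r = M * d + rho" by (simp add: rho_def d_def)
  have rho: "0 \<le> rho" "rho < M" using M by (simp_all add: rho_def)
  have r0: "rho \<noteq> 0"
  proof
    assume "rho = 0" then have "r = int m * (2 * d)" using rd by (simp add: M_def)
    then show False using r by simp
  qed
  have rm: "rho \<noteq> int m"
  proof
    assume "rho = int m" then have "r = int m * (2 * d + 1)" using rd by (simp add: M_def algebra_simps)
    then show False using r by simp
  qed
  have "nat rho \<in> {1..2 * m - 1} - {m}" using rho r0 rm by (auto simp: M_def)
  moreover have "r = int (nat rho) - 2 * int m * (- d)" using rd rho by (simp add: M_def)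
  ultimately show "r \<in> (\<lambda>(k, n). int k - 2 * int m * n) ` (({1..2 * m - 1} - {m}) \<times> UNIV)"
    by (intro image_eqI[of _ _ "(nat rho, - d)"]) auto
qed

lemma phi_inj:
  fixes m :: nat
  assumes m: "1 \<le> m"
  shows "inj_on (\<lambda>(k, n). int k - 2 * int m * n) (({1..2 * m - 1} - {m}) \<times> UNIV)"
proof (rule inj_onI)
  fix x y assume x: "x \<in> ({1..2 * m - 1} - {m}) \<times> (UNIV :: int set)" and y: "y \<in> ({1..2 * m - 1} - {m}) \<times> (UNIV :: int set)"
    and exy: "(\<lambda>(k, n). int k - 2 * int m * n) x = (\<lambda>(k, n). int k - 2 * int m * n) y"
  obtain k n where xk: "x = (k, n)" by (cases x)
  obtain k' n' where yk: "y = (k', n')" by (cases y)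
  have k: "k \<in> {1..2 * m - 1} - {m}" and k': "k' \<in> {1..2 * m - 1} - {m}" using x y xk yk by auto
  have eq: "int k - 2 * int m * n = int k' - 2 * int m * n'" using exy xk yk by simp
  have e2: "int k - int k' = 2 * int m * (n - n')" using eq by (simp add: algebra_simps)
  have bk: "int k < 2 * int m" "int k' < 2 * int m" "0 < int k" "0 < int k'" using k k' m by auto
  have "n = n'"
  proof (rule ccontr)
    assume "n \<noteq> n'"
    then have "n - n' \<ge> 1 \<or> n - n' \<le> -1" by auto
    then show False
    proof
      assume "n - n' \<ge> 1"
      then have "2 * int m * 1 \<le> 2 * int m * (n - n')" by (intro mult_left_mono) auto
      then show False using e2 bk by linarith
    next
      assume "n - n' \<le> -1"
      then have "2 * int m * (n - n') \<le> 2 * int m * (-1)" by (intro mult_left_mono) auto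
      then show False using e2 bk by linarith
    qed
  qed
  then show "x = y" using e2 xk yk by simp
qed

lemma G_sum_eval:
  fixes m s :: nat
  assumes m: "1 \<le> m" and s: "even s" "2 \<le> s"
  shows "(\<Sum>k\<in>{1..2 * m - 1} - {m}. G s (real k / (2 * real m))) = (2 * real m) ^ s * (1 - 1 / real m ^ s) * G s 0"
proof -
  define K where "K = {1..2 * m - 1} - {m}"
  define h where "h r = 1 / (of_int r :: real) ^ s" for r :: int
  define phi where "phi = (\<lambda>(k::nat, n::int). int k - 2 * int m * n)"
  have sh: "h summable_on A" for A unfolding h_def by (rule h_summable[OF s])
  have c0: "(2 * real m) \<noteq> 0" using m by simp
  have a: "G s (real k / (2 * real m)) = (2 * real m) ^ s * (\<Sum>\<^sub>\<infinity>n::int. h (phi (k, n)))" for k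
  proof -
    have "G s (real k / (2 * real m)) = (\<Sum>\<^sub>\<infinity>n::int. (2 * real m) ^ s * h (phi (k, n)))"
      unfolding G_def
    proof (rule infsum_cong)
      fix n :: int
      define y where "y = real k / (2 * real m) - of_int n"
      have e1: "of_int (phi (k, n)) = real k - 2 * real m * of_int n" by (simp add: phi_def)
      have e2: "2 * real m * y = real k - 2 * real m * of_int n" unfolding y_def using c0 by (simp add: right_diff_distrib)
      have e: "of_int (phi (k, n)) = (2 * real m) * y" using e1 e2 by simp
      show "1 / (real k / (2 * real m) - of_int n) ^ s = (2 * real m) ^ s * h (phi (k, n))"
        unfolding h_def e y_def[symmetric] using c0 s by (cases "y = 0") (simp_all add: power_mult_distrib)
    qed
    also have "\<dots> = (2 * real m) ^ s * (\<Sum>\<^sub>\<infinity>n::int. h (phi (k, n)))" by (rule infsum_cmult_right')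
    finally show ?thesis .
  qed
  have inj: "inj_on phi (K \<times> UNIV)" unfolding phi_def K_def by (rule phi_inj[OF m])
  have img: "phi ` (K \<times> UNIV) = {r. \<not> int m dvd r}" unfolding phi_def K_def by (rule phi_image[OF m])
  have shp: "(h \<circ> phi) summable_on (K \<times> UNIV)"
    using summable_on_reindex[OF inj, of h] sh by simp
  have finK: "finite K" by (simp add: K_def)
  have b: "(\<Sum>k\<in>K. (\<Sum>\<^sub>\<infinity>n::int. h (phi (k, n)))) = infsum (h \<circ> phi) (K \<times> UNIV)"
  proof -
    have "(\<Sum>k\<in>K. (\<Sum>\<^sub>\<infinity>n::int. h (phi (k, n)))) = infsum (\<lambda>k. infsum (\<lambda>n. (h \<circ> phi) (k, n)) UNIV) K"
      using finK by (simp add: o_def)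
    also have "\<dots> = infsum (h \<circ> phi) (K \<times> UNIV)" by (rule infsum_Sigma_banach[OF shp])
    finally show ?thesis .
  qed
  have c: "infsum (h \<circ> phi) (K \<times> UNIV) = infsum h {r. \<not> int m dvd r}"
    using infsum_reindex[OF inj, of h] img by simp
  have injm: "inj (\<lambda>q::int. int m * q)" using m by (auto simp: inj_on_def)
  have rng: "range (\<lambda>q::int. int m * q) = {r. int m dvd r}" by (auto elim: dvdE)
  have d1: "infsum h {r. int m dvd r} = (1 / real m ^ s) * infsum h UNIV"
  proof -
    have "infsum h {r. int m dvd r} = infsum (h \<circ> (\<lambda>q::int. int m * q)) UNIV"
      using infsum_reindex[OF injm, of h] rng by simp
    also have "\<dots> = infsum (\<lambda>q. (1 / real m ^ s) * h q) UNIV"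
      by (intro infsum_cong) (simp add: h_def power_mult_distrib)
    also have "\<dots> = (1 / real m ^ s) * infsum h UNIV" by (rule infsum_cmult_right')
    finally show ?thesis .
  qed
  have d2: "infsum h UNIV = infsum h {r. int m dvd r} + infsum h {r. \<not> int m dvd r}"
  proof -
    have "infsum h ({r. int m dvd r} \<union> {r. \<not> int m dvd r}) = infsum h {r. int m dvd r} + infsum h {r. \<not> int m dvd r}"
      by (rule infsum_Un_disjoint[OF sh sh]) auto
    moreover have "{r. int m dvd r} \<union> {r. \<not> int m dvd r} = UNIV" by auto
    ultimately show ?thesis by simp
  qed
  have Z: "G s 0 = infsum h UNIV" unfolding h_def by (rule G0_h[OF s(1)])
  have "(\<Sum>k\<in>K. G s (real k / (2 * real m))) = (2 * real m) ^ s * (\<Sum>k\<in>K. (\<Sum>\<^sub>\<infinity>n::int. h (phi (k, n))))"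
    unfolding a by (simp add: sum_distrib_left)
  also have "\<dots> = (2 * real m) ^ s * infsum h {r. \<not> int m dvd r}" unfolding b c ..
  also have "infsum h {r. \<not> int m dvd r} = (1 - 1 / real m ^ s) * G s 0"
  proof -
    have "infsum h {r. \<not> int m dvd r} = infsum h UNIV - infsum h {r. int m dvd r}" using d2 by linarith
    also have "\<dots> = (1 - 1 / real m ^ s) * infsum h UNIV" unfolding d1 by (simp add: algebra_simps)
    finally show ?thesis unfolding Z .
  qed
  finally show ?thesis unfolding K_def by simp
qed



lemma unit_nonint: "0 < (x::real) \<Longrightarrow> x < 1 \<Longrightarrow> x \<notin> \<int>"
  using frac_gt_0_iff[of x] frac_eq[of x] by simp

lemma G0_zeta:
  assumes s: "even s" "2 \<le> s"
  shows "G s 0 = 2 * zeta_real (real s)"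
proof -
  define z where "z = (\<Sum>n. 1 / real (Suc n) ^ s)"
  have sm: "summable (\<lambda>n. 1 / real (Suc n) ^ s)"
  proof -
    have h0: "summable (\<lambda>n. 1 / real n ^ s)"
      using inverse_power_summable[of s, where 'a=real] s by (simp add: inverse_eq_divide)
    show ?thesis using summable_Suc_iff[of "\<lambda>n. 1 / real n ^ s"] h0 by (simp del: of_nat_Suc)
  qed
  have z1: "(\<lambda>n. 1 / real (Suc n) ^ s) sums z" using sm by (simp add: z_def summable_sums)
  have z0: "(\<lambda>n. 1 / real n ^ s) sums z"
  proof -
    have zs: "1 / real 0 ^ s = 0" using s by simp
    have "(\<lambda>n. 1 / real n ^ s) sums (z + 1 / real 0 ^ s)"
      using z1 sums_Suc_iff[of "\<lambda>n. 1 / real n ^ s" z] by (simp del: of_nat_Suc)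
    then show ?thesis unfolding zs by simp
  qed
  have "(\<lambda>j. 1 / (0 - real j) ^ s + 1 / (0 + real j + 1) ^ s) sums G s 0" using G_sums[of s 0] s by simp
  moreover have "(\<lambda>j. 1 / (0 - real j) ^ s + 1 / (0 + real j + 1) ^ s) = (\<lambda>j. 1 / real j ^ s + 1 / real (Suc j) ^ s)"
    using s(1) by (intro ext) (simp add: power_minus_even add.commute)
  ultimately have "(\<lambda>j. 1 / real j ^ s + 1 / real (Suc j) ^ s) sums G s 0" by simp
  moreover have "(\<lambda>j. 1 / real j ^ s + 1 / real (Suc j) ^ s) sums (z + z)" by (rule sums_add[OF z0 z1])
  ultimately have "G s 0 = z + z" by (rule sums_unique2)
  moreover have "zeta_real (real s) = z"
    unfolding zeta_real_def z_def by (intro suminf_cong) (simp add: powr_realpow del: of_nat_Suc)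
  ultimately show ?thesis by simp
qed

lemma sym_sum:
  fixes f :: "nat \<Rightarrow> real"
  assumes m: "1 \<le> m" and sym: "\<And>k. 1 \<le> k \<Longrightarrow> k < m \<Longrightarrow> f (2 * m - k) = f k"
  shows "(\<Sum>k\<in>{1..2 * m - 1} - {m}. f k) = 2 * (\<Sum>k=1..m - 1. f k)"
proof -
  have U: "{1..2 * m - 1} - {m} = {1..m - 1} \<union> {m + 1..2 * m - 1}" using m by auto
  have D: "{1..m - 1} \<inter> {m + 1..2 * m - 1} = {}" by auto
  have R: "(\<Sum>k\<in>{m + 1..2 * m - 1}. f k) = (\<Sum>k=1..m - 1. f k)"
  proof (rule sum.reindex_bij_witness[of _ "\<lambda>k. 2 * m - k" "\<lambda>k. 2 * m - k"])
    fix k assume "k \<in> {m + 1..2 * m - 1}"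
    then have a: "1 \<le> 2 * m - k" "2 * m - k < m" "2 * m - (2 * m - k) = k" by auto
    show "f (2 * m - k) = f k" using sym[OF a(1) a(2)] a(3) by simp
  qed auto
  have "(\<Sum>k\<in>{1..2 * m - 1} - {m}. f k) = (\<Sum>k=1..m - 1. f k) + (\<Sum>k\<in>{m + 1..2 * m - 1}. f k)"
    unfolding U by (rule sum.union_disjoint) (use D in auto)
  then show ?thesis using R by simp
qed

lemma cs_sym:
  fixes m k :: nat
  assumes "1 \<le> m" "k \<le> 2 * m"
  shows "cs v (real (2 * m - k) / (2 * real m)) = cs v (real k / (2 * real m))"
proof -
  have "pi * (real (2 * m - k) / (2 * real m)) = pi - pi * (real k / (2 * real m))"
    using assms by (simp add: of_nat_diff field_simps)
  then show ?thesis by (simp add: cs_def)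
qed



lemma GF_formula:
  assumes m: "1 \<le> m" and v: "1 \<le> v"
  shows "GF_sum m v = (1 / (2 * real m)) ^ (2 * v) *
    (\<Sum>j<v. beta v j * zeta_real (real (2 * j + 2)) * 4 ^ (j + 1) * (real m ^ (2 * (j + 1)) - 1))"
proof -
  obtain u where vu: "v = Suc u" using v by (cases v) auto
  define K where "K = {1..2 * m - 1} - {m}"
  define f where "f k = cs v (real k / (2 * real m))" for k
  have m0: "real m \<noteq> 0" using m by simp
  have step1: "(pi / (2 * real m)) ^ (2 * v) * (1 / sin (real k * pi / (2 * real m)) ^ (2 * v))
      = (1 / (2 * real m)) ^ (2 * v) * f k" for k
  proof -
    have a: "real k * pi / (2 * real m) = pi * (real k / (2 * real m))" by simp
    show ?thesis unfolding f_def cs_def a by (simp add: power_divide)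
  qed
  have gf: "GF_sum m v = (1 / (2 * real m)) ^ (2 * v) * (\<Sum>k=1..m - 1. f k)"
    unfolding GF_sum_def sum_distrib_left step1 ..
  have sym: "(\<Sum>k\<in>K. f k) = 2 * (\<Sum>k=1..m - 1. f k)"
    unfolding K_def by (rule sym_sum[OF m]) (unfold f_def, rule cs_sym[OF m], simp)
  have nonint: "real k / (2 * real m) \<notin> \<int>" if "k \<in> K" for k
  proof (rule unit_nonint)
    show "0 < real k / (2 * real m)" using that m by (auto simp: K_def)
    have "real k < 2 * real m" using that m by (auto simp: K_def)
    then show "real k / (2 * real m) < 1" using m by simp
  qed
  have "(\<Sum>k\<in>K. f k) = (\<Sum>k\<in>K. Fs v (real k / (2 * real m)))"
    unfolding f_def vu using cs_eq nonint vu by (intro sum.cong refl) auto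
  also have "\<dots> = (\<Sum>j<v. beta v j * (\<Sum>k\<in>K. G (2 * j + 2) (real k / (2 * real m))))"
    unfolding Fs_def by (simp add: sum.swap[of _ K] sum_distrib_left)
  also have "\<dots> = (\<Sum>j<v. beta v j * ((2 * real m) ^ (2 * j + 2) * (1 - 1 / real m ^ (2 * j + 2)) * G (2 * j + 2) 0))"
    unfolding K_def by (intro sum.cong refl) (subst G_sum_eval[OF m], auto)
  also have "\<dots> = (\<Sum>j<v. 2 * (beta v j * zeta_real (real (2 * j + 2)) * 4 ^ (j + 1) * (real m ^ (2 * (j + 1)) - 1)))"
  proof (intro sum.cong refl)
    fix j
    have z: "G (2 * j + 2) 0 = 2 * zeta_real (real (2 * j + 2))" by (rule G0_zeta) auto
    have p: "(2 * real m) ^ (2 * j + 2) * (1 - 1 / real m ^ (2 * j + 2)) = 4 ^ (j + 1) * (real m ^ (2 * (j + 1)) - 1)"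
    proof -
      have e: "2 * j + 2 = 2 * (j + 1)" by simp
      have "(2 * real m) ^ (2 * (j + 1)) = ((2 * real m) ^ 2) ^ (j + 1)" by (rule power_mult)
      also have "\<dots> = (4 * real m ^ 2) ^ (j + 1)" by (simp add: power_mult_distrib power2_eq_square)
      also have "\<dots> = 4 ^ (j + 1) * real m ^ (2 * (j + 1))" by (simp only: power_mult_distrib power_mult)
      finally have "(2 * real m) ^ (2 * j + 2) = 4 ^ (j + 1) * real m ^ (2 * (j + 1))" unfolding e .
      then show ?thesis using m0 by (simp add: field_simps)
    qed
    show "beta v j * ((2 * real m) ^ (2 * j + 2) * (1 - 1 / real m ^ (2 * j + 2)) * G (2 * j + 2) 0)
        = 2 * (beta v j * zeta_real (real (2 * j + 2)) * 4 ^ (j + 1) * (real m ^ (2 * (j + 1)) - 1))"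
      unfolding z p by (simp add: algebra_simps)
  qed
  finally have A: "(\<Sum>k\<in>K. f k) = (\<Sum>j<v. 2 * (beta v j * zeta_real (real (2 * j + 2)) * 4 ^ (j + 1) * (real m ^ (2 * (j + 1)) - 1)))" .
  have B: "(\<Sum>j<v. 2 * (beta v j * zeta_real (real (2 * j + 2)) * 4 ^ (j + 1) * (real m ^ (2 * (j + 1)) - 1)))
      = 2 * (\<Sum>j<v. beta v j * zeta_real (real (2 * j + 2)) * 4 ^ (j + 1) * (real m ^ (2 * (j + 1)) - 1))"
    by (rule sum_distrib_left[symmetric])
  have "(\<Sum>k=1..m - 1. f k) = (\<Sum>j<v. beta v j * zeta_real (real (2 * j + 2)) * 4 ^ (j + 1) * (real m ^ (2 * (j + 1)) - 1))"
    using A B sym by linarith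
  then show ?thesis unfolding gf by (simp only:)
qed



lemma poly_construct:
  fixes a :: "nat \<Rightarrow> real"
  assumes v: "1 \<le> v" and a0: "a (v - 1) \<noteq> 0"
  shows "\<exists>p :: real poly. degree p = v - 1 \<and> lead_coeff p = a (v - 1) \<and> poly p 0 = (\<Sum>j<v. a j) \<and>
           (\<forall>x. (x - 1) * poly p x = (\<Sum>j<v. a j * (x ^ (j + 1) - 1)))"
proof -
  define b where "b i = (\<Sum>j<v. if i \<le> j then a j else 0)" for i
  define p where "p = (\<Sum>i<v. monom (b i) i)"
  have cp: "coeff p n = (if n < v then b n else 0)" for n
    unfolding p_def coeff_sum by (simp add: coeff_monom)
  have bv: "b (v - 1) = a (v - 1)"
  proof -
    have "b (v - 1) = (\<Sum>j<v. if j = v - 1 then a j else 0)"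
      unfolding b_def using v by (intro sum.cong refl) auto
    also have "\<dots> = a (v - 1)" using v by (simp add: sum.delta)
    finally show ?thesis .
  qed
  have dg: "degree p = v - 1"
  proof (rule antisym)
    show "degree p \<le> v - 1" by (rule degree_le) (auto simp: cp)
    show "v - 1 \<le> degree p" by (rule le_degree) (use v a0 bv in \<open>simp add: cp\<close>)
  qed
  have lc: "lead_coeff p = a (v - 1)" unfolding dg cp using v bv by simp
  have p0: "poly p 0 = (\<Sum>j<v. a j)" unfolding poly_0_coeff_0 cp using v by (simp add: b_def)
  have px: "(x - 1) * poly p x = (\<Sum>j<v. a j * (x ^ (j + 1) - 1))" for x
  proof -
    have "poly p x = (\<Sum>i<v. b i * x ^ i)" unfolding p_def poly_sum by (simp add: poly_monom)
    also have "\<dots> = (\<Sum>i<v. \<Sum>j<v. (if i \<le> j then a j * x ^ i else 0))"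
      unfolding b_def sum_distrib_right by (intro sum.cong refl) auto
    also have "\<dots> = (\<Sum>j<v. \<Sum>i<v. (if i \<le> j then a j * x ^ i else 0))" by (rule sum.swap)
    also have "\<dots> = (\<Sum>j<v. a j * (\<Sum>i<Suc j. x ^ i))"
    proof (intro sum.cong refl)
      fix j assume j: "j \<in> {..<v}"
      have "(\<Sum>i<v. (if i \<le> j then a j * x ^ i else 0)) = (\<Sum>i\<in>{i\<in>{..<v}. i \<le> j}. a j * x ^ i)"
        by (rule sum.inter_filter[symmetric]) simp
      also have "{i\<in>{..<v}. i \<le> j} = {..<Suc j}" using j by auto
      finally show "(\<Sum>i<v. (if i \<le> j then a j * x ^ i else 0)) = a j * (\<Sum>i<Suc j. x ^ i)"
        unfolding sum_distrib_left .
    qed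
    finally have "(x - 1) * poly p x = (\<Sum>j<v. a j * ((x - 1) * (\<Sum>i<Suc j. x ^ i)))"
      by (simp add: sum_distrib_left algebra_simps)
    also have "\<dots> = (\<Sum>j<v. a j * (x ^ (j + 1) - 1))"
    proof (intro sum.cong refl)
      fix j
      have "x ^ (j + 1) - 1 = (x - 1) * (\<Sum>i<Suc j. x ^ i)" by (metis Suc_eq_plus1 power_diff_1_eq)
      then show "a j * ((x - 1) * (\<Sum>i<Suc j. x ^ i)) = a j * (x ^ (j + 1) - 1)" by simp
    qed
    finally show ?thesis .
  qed
  show ?thesis using dg lc p0 px by blast
qed

lemma zeta_pos:
  assumes "2 \<le> s"
  shows "0 < zeta_real (real s)"
proof -
  have h0: "summable (\<lambda>n. 1 / real n ^ s)"
    using inverse_power_summable[of s, where 'a=real] assms by (simp add: inverse_eq_divide)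
  have sm: "summable (\<lambda>n. 1 / real (Suc n) ^ s)"
    using summable_Suc_iff[of "\<lambda>n. 1 / real n ^ s"] h0 by (simp del: of_nat_Suc)
  have "zeta_real (real s) = (\<Sum>n. 1 / real (Suc n) ^ s)"
    unfolding zeta_real_def by (intro suminf_cong) (simp add: powr_realpow del: of_nat_Suc)
  also have "\<dots> > 0" by (rule suminf_pos[OF sm]) simp
  finally show ?thesis .
qed



lemma const_term:
  assumes v: "v = Suc u" and j': "j' \<le> u"
  shows "beta v (u - j') * zeta_real (real (2 * (u - j') + 2)) * 4 ^ (u - j' + 1) / 2 ^ v
       = 2 ^ v / fact (2 * v - 1) * (pi ^ (2 * j') * esym_sq v j' * Gamma (real (2 * v - 2 * j'))
           * zeta_real (real (2 * v - 2 * j')))"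
proof -
  define j where "j = u - j'"
  have jj: "j + j' = u" using j' by (simp add: j_def)
  have e1: "v - 1 - j = j'" using v jj by simp
  have e2: "2 * v - 2 * j' = 2 * j + 2" using v jj by simp
  have e3: "real (2 * j + 2) = 1 + real (2 * j + 1)" by simp
  have G: "Gamma (real (2 * j + 2)) = fact (2 * j + 1)"
    unfolding e3 by (rule Gamma_fact)
  define F where "F = (fact (2 * j + 1) :: real)"
  define Fv where "Fv = (fact (2 * v - 1) :: real)"
  define Z where "Z = zeta_real (real (2 * j + 2))"
  define E where "E = esym_sq v j'"
  have b: "beta v j = (4 * pi ^ 2) ^ j' * E * F / Fv"
    unfolding beta_def e1 E_def F_def Fv_def ..
  have p1: "(4 * pi ^ 2) ^ j' = (4::real) ^ j' * pi ^ (2 * j')" by (simp add: power_mult_distrib power_mult)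
  have p2: "(4::real) ^ j' * 4 ^ (j + 1) = 2 ^ v * 2 ^ v"
  proof -
    have "(4::real) ^ j' * 4 ^ (j + 1) = 4 ^ v" using v jj by (simp add: power_add[symmetric])
    also have "\<dots> = (2 * 2) ^ v" by simp
    also have "\<dots> = 2 ^ v * 2 ^ v" by (rule power_mult_distrib)
    finally show ?thesis .
  qed
  have Fv0: "Fv \<noteq> 0" by (simp add: Fv_def)
  have "beta v j * Z * 4 ^ (j + 1) / 2 ^ v = 2 ^ v / Fv * (pi ^ (2 * j') * E * F * Z)"
  proof -
    have "beta v j * Z * 4 ^ (j + 1) / 2 ^ v = ((4::real) ^ j' * 4 ^ (j + 1)) * pi ^ (2 * j') * E * F * Z / (Fv * 2 ^ v)"
      unfolding b p1 by (simp add: field_simps)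
    also have "\<dots> = 2 ^ v / Fv * (pi ^ (2 * j') * E * F * Z)" unfolding p2 using Fv0 by (simp add: field_simps)
    finally show ?thesis .
  qed
  then show ?thesis unfolding j_def[symmetric] e2 G F_def[symmetric] Z_def E_def Fv_def by simp
qed

theorem mainTheorem4:
  fixes v :: nat
  assumes "v \<ge> 1"
  shows "\<exists>p :: real poly.
     degree p = v - 1 \<and>
     (\<forall>m::nat. m \<ge> 1 \<longrightarrow>
        GF_sum m v = (2 * (real m)^2) powi (- int v) * ((real m)^2 - 1) * poly p ((real m)^2)) \<and>
     lead_coeff p = 2 ^ v * zeta_real (real (2 * v)) \<and>
     poly p 0 = 2 ^ v / fact (2 * v - 1) *
        (\<Sum>j = 0..v - 1. pi ^ (2 * j) * esym_sq v j * Gamma (real (2 * v - 2 * j))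
                           * zeta_real (real (2 * v - 2 * j)))"
proof -
  have v: "1 \<le> v" using assms .
  obtain u where vu: "v = Suc u" using v by (cases v) auto
  define a where "a j = beta v j * zeta_real (real (2 * j + 2)) * 4 ^ (j + 1) / 2 ^ v" for j
  have bv: "beta v (v - 1) = 1" unfolding beta_def using vu by (simp add: esym_zero)
  have zv: "zeta_real (real (2 * (v - 1) + 2)) = zeta_real (real (2 * v))" using vu by simp
  have av: "a (v - 1) = 2 ^ v * zeta_real (real (2 * v))"
  proof -
    have "(4::real) ^ (v - 1 + 1) = 2 ^ v * 2 ^ v" using vu by (simp add: power_mult_distrib[symmetric])
    then show ?thesis unfolding a_def bv zv by simp
  qed
  have a0: "a (v - 1) \<noteq> 0" unfolding av using zeta_pos[of "2 * v"] v by simp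
  obtain p :: "real poly" where dg: "degree p = v - 1" and lc: "lead_coeff p = a (v - 1)"
    and p0: "poly p 0 = (\<Sum>j<v. a j)" and px: "\<And>x. (x - 1) * poly p x = (\<Sum>j<v. a j * (x ^ (j + 1) - 1))"
    using poly_construct[of v a, OF v a0] by blast
  have main: "GF_sum m v = (2 * (real m)^2) powi (- int v) * ((real m)^2 - 1) * poly p ((real m)^2)"
    if m: "m \<ge> 1" for m :: nat
  proof -
    define S where "S = (\<Sum>j<v. beta v j * zeta_real (real (2 * j + 2)) * 4 ^ (j + 1) * (real m ^ (2 * (j + 1)) - 1))"
    have gf: "GF_sum m v = (1 / (2 * real m)) ^ (2 * v) * S" unfolding S_def by (rule GF_formula[OF m v])
    have q: "((real m)^2 - 1) * poly p ((real m)^2) = S / 2 ^ v"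
    proof -
      have "((real m)^2 - 1) * poly p ((real m)^2) = (\<Sum>j<v. a j * (((real m)^2) ^ (j + 1) - 1))" by (rule px)
      also have "\<dots> = (\<Sum>j<v. beta v j * zeta_real (real (2 * j + 2)) * 4 ^ (j + 1) * (real m ^ (2 * (j + 1)) - 1) / 2 ^ v)"
      proof (intro sum.cong refl)
        fix j
        have pm: "((real m)^2) ^ (j + 1) = real m ^ (2 * (j + 1))" by (rule power_mult[symmetric])
        show "a j * (((real m)^2) ^ (j + 1) - 1) = beta v j * zeta_real (real (2 * j + 2)) * 4 ^ (j + 1) * (real m ^ (2 * (j + 1)) - 1) / 2 ^ v"
          unfolding a_def pm by simp
      qed
      also have "\<dots> = S / 2 ^ v" unfolding S_def by (rule sum_divide_distrib[symmetric])
      finally show ?thesis .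
    qed
    have pw: "(2 * (real m)^2) powi (- int v) = inverse ((2 * (real m)^2) ^ v)"
      by (simp add: power_int_minus)
    have c: "(1 / (2 * real m)) ^ (2 * v) = inverse ((2 * (real m)^2) ^ v) / 2 ^ v"
    proof -
      have sq: "(2 * real m) ^ 2 = 2 * (real m)^2 * 2" by (simp add: power2_eq_square)
      have "(2 * real m) ^ (2 * v) = ((2 * real m) ^ 2) ^ v" by (rule power_mult)
      also have "\<dots> = (2 * (real m)^2 * 2) ^ v" unfolding sq ..
      also have "\<dots> = (2 * (real m)^2) ^ v * 2 ^ v" by (rule power_mult_distrib)
      finally have "(2 * real m) ^ (2 * v) = (2 * (real m)^2) ^ v * 2 ^ v" .
      then show ?thesis by (simp add: power_one_over inverse_eq_divide)
    qed
    show ?thesis unfolding gf pw mult.assoc q c by simp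
  qed
  have const: "poly p 0 = 2 ^ v / fact (2 * v - 1) *
        (\<Sum>j = 0..v - 1. pi ^ (2 * j) * esym_sq v j * Gamma (real (2 * v - 2 * j))
                           * zeta_real (real (2 * v - 2 * j)))"
  proof -
    have "poly p 0 = (\<Sum>j'=0..u. a (u - j'))"
      unfolding p0 by (rule sum.reindex_bij_witness[of _ "\<lambda>j. u - j" "\<lambda>j. u - j"]) (auto simp: vu)
    also have "\<dots> = (\<Sum>j'=0..u. 2 ^ v / fact (2 * v - 1) * (pi ^ (2 * j') * esym_sq v j' * Gamma (real (2 * v - 2 * j'))
           * zeta_real (real (2 * v - 2 * j'))))"
      unfolding a_def by (intro sum.cong refl) (rule const_term[OF vu], simp)
    finally show ?thesis by (simp add: sum_distrib_left vu)
  qed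
  show ?thesis using dg main lc av const by auto
qed

end
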